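(* Let $\Lambda$ be the double of a cellular decomposition of a compact oriented surface without boundary, with a discrete conformal structure $\rho$. Let $\mathcal{A},\mathcal{B}$ be two non-intersecting simple loops in $\Lambda$ such that exactly one edge of $\mathcal{A}$ is dual to an edge of $\mathcal{B}$. Then there exists a unique holomorphic $1$-form $\Phi_{\mathcal{AB}}$ on $\Lambda$ such that $\operatorname{Re}\int_{\mathcal{B}}\Phi_{\mathcal{AB}}=1$ and $\int_\gamma\Phi_{\mathcal{AB}}\in i\mathbb{R}$ for every loop $\gamma$ in $\Lambda$ none of whose edges is dual to an edge of $\mathcal{A}$.
   Context: $\Lambda=\Gamma\sqcup\Gamma^*$ with $\Gamma$ a cellular decomposition and $\Gamma^*$ its Poincaré dual (each edge $e$ crossed by one dual edge $e^*$, $e^{**}=-e$); $\rho:\Lambda_1\to(0,\infty)$ with $\rho(e)\rho(e^* )=1$. Hodge star on 1-forms: $\int_e*\alpha=-\rho(e^* )\int_{e^*}\alpha$. A 1-form $\alpha$ on $\Lambda$ is holomorphic if it is closed ($\oint_{\partial F}\alpha=0$ on every face $F$ of $\Gamma$ and $\Gamma^*$) and $*\alpha=-i\alpha$. *)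

theory Defs
  imports Complex_Main
begin

text \<open>
Combinatorial encoding of a cellular decomposition Gamma of a compact (connected) oriented
surface without boundary: a combinatorial map on a finite set of darts D (oriented edges of
Gamma) with a fixed-point-free involution al (reversal of orientation) and a permutation sg
(counterclockwise rotation of darts around their common initial vertex).
Vertices of Gamma are the sg-orbits, faces of Gamma are the orbits of sg o al.
The double Lambda = Gamma disjoint-union Gamma^*: its oriented edges are Prim d (the dart d of
Gamma) and Dua d (the dual edge d^* of Gamma^*, crossing d) for d in D.
\<close>

datatype 'd ledge = Prim 'd | Dua 'd

definition comb_map :: "'d set \<Rightarrow> ('d \<Rightarrow> 'd) \<Rightarrow> ('d \<Rightarrow> 'd) \<Rightarrow> bool" where
  "comb_map D al sg \<longleftrightarrow> finite D \<and> D \<noteq> {} \<and>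
     bij_betw al D D \<and> bij_betw sg D D \<and>
     (\<forall>d\<in>D. al (al d) = d \<and> al d \<noteq> d) \<and>
     (\<forall>x\<in>D. \<forall>y\<in>D. (x, y) \<in> ({(u, al u) | u. u \<in> D} \<union> {(u, sg u) | u. u \<in> D})\<^sup>*)"

definition orbit :: "('d \<Rightarrow> 'd) \<Rightarrow> 'd \<Rightarrow> 'd set" where
  "orbit f d = {(f ^^ n) d | n. True}"

definition ledges :: "'d set \<Rightarrow> 'd ledge set" where
  "ledges D = Prim ` D \<union> Dua ` D"

fun lrev :: "('d \<Rightarrow> 'd) \<Rightarrow> 'd ledge \<Rightarrow> 'd ledge" where
  "lrev al (Prim d) = Prim (al d)"
| "lrev al (Dua d) = Dua (al d)"

text \<open>Duality e \<mapsto> e^*, with e^** = -e.\<close>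
fun ldual :: "('d \<Rightarrow> 'd) \<Rightarrow> 'd ledge \<Rightarrow> 'd ledge" where
  "ldual al (Prim d) = Dua d"
| "ldual al (Dua d) = Prim (al d)"

text \<open>Vertices of Lambda: (True, vertex of Gamma) or (False, face of Gamma = vertex of Gamma^*).\<close>
fun ltail :: "('d \<Rightarrow> 'd) \<Rightarrow> ('d \<Rightarrow> 'd) \<Rightarrow> 'd ledge \<Rightarrow> bool \<times> 'd set" where
  "ltail al sg (Prim d) = (True, orbit sg d)"
| "ltail al sg (Dua d) = (False, orbit (sg \<circ> al) d)"

definition lhead :: "('d \<Rightarrow> 'd) \<Rightarrow> ('d \<Rightarrow> 'd) \<Rightarrow> 'd ledge \<Rightarrow> bool \<times> 'd set" where
  "lhead al sg e = ltail al sg (lrev al e)"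

definition dual_edges :: "('d \<Rightarrow> 'd) \<Rightarrow> 'd ledge \<Rightarrow> 'd ledge \<Rightarrow> bool" where
  "dual_edges al e f \<longleftrightarrow> ldual al e = f \<or> ldual al e = lrev al f"

definition is_loop :: "'d set \<Rightarrow> ('d \<Rightarrow> 'd) \<Rightarrow> ('d \<Rightarrow> 'd) \<Rightarrow> 'd ledge list \<Rightarrow> bool" where
  "is_loop D al sg \<gamma> \<longleftrightarrow> \<gamma> \<noteq> [] \<and> set \<gamma> \<subseteq> ledges D \<and>
     (\<forall>i. Suc i < length \<gamma> \<longrightarrow> lhead al sg (\<gamma> ! i) = ltail al sg (\<gamma> ! Suc i)) \<and>
     lhead al sg (last \<gamma>) = ltail al sg (hd \<gamma>)"

definition simple_loop :: "'d set \<Rightarrow> ('d \<Rightarrow> 'd) \<Rightarrow> ('d \<Rightarrow> 'd) \<Rightarrow> 'd ledge list \<Rightarrow> bool" where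
  "simple_loop D al sg \<gamma> \<longleftrightarrow> is_loop D al sg \<gamma> \<and>
     distinct (map (ltail al sg) \<gamma>) \<and>
     (\<forall>i j. i < length \<gamma> \<longrightarrow> j < length \<gamma> \<longrightarrow> i \<noteq> j \<longrightarrow>
        \<gamma> ! i \<noteq> \<gamma> ! j \<and> \<gamma> ! i \<noteq> lrev al (\<gamma> ! j))"

definition loops_disjoint :: "('d \<Rightarrow> 'd) \<Rightarrow> ('d \<Rightarrow> 'd) \<Rightarrow> 'd ledge list \<Rightarrow> 'd ledge list \<Rightarrow> bool" where
  "loops_disjoint al sg A B \<longleftrightarrow> set (map (ltail al sg) A) \<inter> set (map (ltail al sg) B) = {}"

definition conformal_structure :: "'d set \<Rightarrow> ('d \<Rightarrow> 'd) \<Rightarrow> ('d ledge \<Rightarrow> real) \<Rightarrow> bool" where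
  "conformal_structure D al \<rho> \<longleftrightarrow> (\<forall>e\<in>ledges D. \<rho> e > 0 \<and> \<rho> (lrev al e) = \<rho> e) \<and>
     (\<forall>d\<in>D. \<rho> (Prim d) * \<rho> (Dua d) = 1)"

text \<open>1-forms: functions on oriented edges, odd under reversal (zero off the edge set),
  \<open>\<alpha> e\<close> standing for the integral of the form along e.\<close>
definition one_form :: "'d set \<Rightarrow> ('d \<Rightarrow> 'd) \<Rightarrow> ('d ledge \<Rightarrow> complex) \<Rightarrow> bool" where
  "one_form D al \<alpha> \<longleftrightarrow> (\<forall>e\<in>ledges D. \<alpha> (lrev al e) = - \<alpha> e) \<and> (\<forall>e. e \<notin> ledges D \<longrightarrow> \<alpha> e = 0)"

definition hodge :: "('d \<Rightarrow> 'd) \<Rightarrow> ('d ledge \<Rightarrow> real) \<Rightarrow> ('d ledge \<Rightarrow> complex) \<Rightarrow> 'd ledge \<Rightarrow> complex" where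
  "hodge al \<rho> \<alpha> e = - of_real (\<rho> (ldual al e)) * \<alpha> (ldual al e)"

text \<open>Closedness: integral over the boundary of each face of Gamma (sg o al orbits, traversed
  by primal darts) and each face of Gamma^* (sg orbits = vertices of Gamma, traversed by dual
  edges) vanishes.\<close>
definition closed_form :: "'d set \<Rightarrow> ('d \<Rightarrow> 'd) \<Rightarrow> ('d \<Rightarrow> 'd) \<Rightarrow> ('d ledge \<Rightarrow> complex) \<Rightarrow> bool" where
  "closed_form D al sg \<alpha> \<longleftrightarrow>
     (\<forall>d\<in>D. (\<Sum>x\<in>orbit (sg \<circ> al) d. \<alpha> (Prim x)) = 0) \<and>
     (\<forall>d\<in>D. (\<Sum>x\<in>orbit sg d. \<alpha> (Dua x)) = 0)"

definition holomorphic_form :: "'d set \<Rightarrow> ('d \<Rightarrow> 'd) \<Rightarrow> ('d \<Rightarrow> 'd) \<Rightarrow> ('d ledge \<Rightarrow> real) \<Rightarrow> ('d ledge \<Rightarrow> complex) \<Rightarrow> bool" where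
  "holomorphic_form D al sg \<rho> \<alpha> \<longleftrightarrow> one_form D al \<alpha> \<and> closed_form D al sg \<alpha> \<and>
     (\<forall>e\<in>ledges D. hodge al \<rho> \<alpha> e = - \<i> * \<alpha> e)"

definition loop_integral :: "('d ledge \<Rightarrow> complex) \<Rightarrow> 'd ledge list \<Rightarrow> complex" where
  "loop_integral \<alpha> \<gamma> = sum_list (map \<alpha> \<gamma>)"

end

theory Submission
  imports Defs "Jordan_Normal_Form.Determinant"
begin

lemma linsys_solvable:
  fixes V :: "'v set" and a :: "'v \<Rightarrow> 'v \<Rightarrow> real"
  assumes fin: "finite V"
    and inj: "\<And>h. (\<forall>v\<in>V. (\<Sum>u\<in>V. a v u * h u) = 0) \<Longrightarrow> (\<forall>v\<in>V. h v = 0)"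
  shows "\<exists>h. \<forall>v\<in>V. (\<Sum>u\<in>V. a v u * h u) = g v"
proof -
  define n where "n = card V"
  obtain e where e: "bij_betw e {0..<n} V" using ex_bij_betw_nat_finite[OF fin] n_def by blast
  define ei where "ei = the_inv_into {0..<n} e"
  have ei: "\<And>u. u \<in> V \<Longrightarrow> ei u < n \<and> e (ei u) = u"
    using e unfolding ei_def
    by (metis atLeastLessThan_iff bij_betw_def f_the_inv_into_f the_inv_into_into subset_refl)
  have eV: "\<And>i. i < n \<Longrightarrow> e i \<in> V" using e by (auto simp: bij_betw_def)
  have eie: "\<And>i. i < n \<Longrightarrow> ei (e i) = i"
    using e unfolding ei_def by (simp add: bij_betw_def the_inv_into_f_f)
  define M where "M = mat n n (\<lambda>(i,j). a (e i) (e j))"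
  have M: "M \<in> carrier_mat n n" by (simp add: M_def)
  have sumre: "\<And>f. (\<Sum>j<n. f (e j)) = (\<Sum>u\<in>V. f u)"
    using sum.reindex_bij_betw[OF e] by (metis atLeast0LessThan)
  have Mv: "\<And>y i. y \<in> carrier_vec n \<Longrightarrow> i < n \<Longrightarrow>
      (M *\<^sub>v y) $ i = (\<Sum>u\<in>V. a (e i) u * y $ (ei u))"
  proof -
    fix y :: "real vec" and i assume y: "y \<in> carrier_vec n" and i: "i < n"
    have "(M *\<^sub>v y) $ i = (\<Sum>j<n. a (e i) (e j) * y $ j)"
      using y i by (simp add: M_def mult_mat_vec_def scalar_prod_def atLeast0LessThan)
    also have "\<dots> = (\<Sum>j<n. a (e i) (e j) * y $ (ei (e j)))"
      by (rule sum.cong) (auto simp: eie)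
    also have "\<dots> = (\<Sum>u\<in>V. a (e i) u * y $ (ei u))" by (rule sumre)
    finally show "(M *\<^sub>v y) $ i = (\<Sum>u\<in>V. a (e i) u * y $ (ei u))" .
  qed
  have "det M \<noteq> 0"
  proof
    assume "det M = 0"
    then obtain y where y: "y \<in> carrier_vec n" "y \<noteq> 0\<^sub>v n" "M *\<^sub>v y = 0\<^sub>v n"
      using det_0_iff_vec_prod_zero_field[OF M] by blast
    have "\<forall>v\<in>V. (\<Sum>u\<in>V. a v u * y $ (ei u)) = 0"
    proof
      fix v assume v: "v \<in> V"
      have "(M *\<^sub>v y) $ (ei v) = 0" using y(3) ei[OF v] by simp
      then show "(\<Sum>u\<in>V. a v u * y $ (ei u)) = 0" using Mv[OF y(1), of "ei v"] ei[OF v] by simp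
    qed
    from inj[OF this] have "\<forall>v\<in>V. y $ (ei v) = 0" .
    then have "\<And>i. i < n \<Longrightarrow> y $ i = 0" using eV eie by metis
    then have "y = 0\<^sub>v n" using y(1) by (intro eq_vecI) auto
    with y(2) show False by simp
  qed
  then have "M \<in> Units (ring_mat TYPE(real) n ())" by (rule det_non_zero_imp_unit[OF M])
  then obtain B where B: "B \<in> carrier_mat n n" "M * B = 1\<^sub>m n"
    by (auto simp: Units_def ring_mat_def)
  define gv where "gv = vec n (\<lambda>i. g (e i))"
  define z where "z = B *\<^sub>v gv"
  have z: "z \<in> carrier_vec n" using B by (simp add: z_def gv_def)
  have "M *\<^sub>v z = gv"
  proof -
    have gv: "gv \<in> carrier_vec n" by (simp add: gv_def)
    have "M *\<^sub>v (B *\<^sub>v gv) = (M * B) *\<^sub>v gv"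
      using assoc_mult_mat_vec[OF M B(1) gv] by simp
    then show ?thesis using B(2) gv by (simp add: z_def)
  qed
  show ?thesis
  proof (intro exI ballI)
    fix v assume v: "v \<in> V"
    have "(\<Sum>u\<in>V. a v u * z $ (ei u)) = (M *\<^sub>v z) $ (ei v)"
      using Mv[OF z, of "ei v"] ei[OF v] by simp
    also have "\<dots> = g v" using \<open>M *\<^sub>v z = gv\<close> ei[OF v] by (simp add: gv_def)
    finally show "(\<Sum>u\<in>V. a v u * z $ (ei u)) = g v" .
  qed
qed

section \<open>Orbits of permutations of finite sets\<close>

lemma funpow_Suc_app: "(f ^^ Suc k) x = (f ^^ k) (f x)"
  by (rule funpow_Suc_right[THEN fun_cong, simplified comp_apply])

lemma funpow_in: "f ` D \<subseteq> D \<Longrightarrow> x \<in> D \<Longrightarrow> (f ^^ n) x \<in> D"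
  by (induction n) auto

lemma inj_on_funpow: "inj_on f D \<Longrightarrow> f ` D \<subseteq> D \<Longrightarrow> inj_on (f ^^ n) D"
proof (induction n)
  case 0 then show ?case by simp
next
  case (Suc n)
  show ?case unfolding funpow_Suc_right
  proof (rule comp_inj_on[OF Suc.prems(1)])
    have "inj_on (f ^^ n) D" using Suc by blast
    then show "inj_on (f ^^ n) (f ` D)" using Suc.prems(2) by (rule inj_on_subset)
  qed
qed

lemma orbit_iff: "y \<in> orbit f x \<longleftrightarrow> (\<exists>n. y = (f ^^ n) x)"
  by (simp add: orbit_def)

lemma orbit_sub: "f ` D \<subseteq> D \<Longrightarrow> x \<in> D \<Longrightarrow> orbit f x \<subseteq> D"
proof
  fix y assume "f ` D \<subseteq> D" "x \<in> D" "y \<in> orbit f x"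
  then show "y \<in> D" using funpow_in orbit_iff by metis
qed

lemma orbit_self: "x \<in> orbit f x"
  using orbit_iff[of x f x] funpow_0 by metis

lemma orbit_period:
  assumes fin: "finite D" and bij: "bij_betw f D D" and x: "x \<in> D"
  shows "\<exists>n>0. (f ^^ n) x = x"
proof -
  have fD: "f ` D \<subseteq> D" and inj: "inj_on f D" using bij by (auto simp: bij_betw_def)
  define g where "g k = (f ^^ k) x" for k
  have gD: "g ` {0..card D} \<subseteq> D"
  proof
    fix z assume "z \<in> g ` {0..card D}"
    then obtain k where "z = g k" by blast
    then show "z \<in> D" using funpow_in[OF fD x, of k] by (simp only: g_def)
  qed
  have ni: "\<not> inj_on g {0..card D}"
  proof
    assume "inj_on g {0..card D}"
    then have "card (g ` {0..card D}) = Suc (card D)" by (simp add: card_image)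
    moreover have "card (g ` {0..card D}) \<le> card D" using card_mono[OF fin gD] .
    ultimately show False by simp
  qed
  obtain i j where ij: "i \<noteq> j" "g i = g j"
    using ni unfolding inj_on_def by blast
  obtain a b where ab: "a < b" "g a = g b"
  proof (cases "i < j")
    case True then show ?thesis using that ij by blast
  next
    case False then have "j < i" using ij(1) by simp
    then show ?thesis using that ij by metis
  qed
  have eq: "(f ^^ a) x = (f ^^ a) ((f ^^ (b - a)) x)"
  proof -
    have "(f ^^ a) ((f ^^ (b - a)) x) = (f ^^ (a + (b - a))) x" by (simp only: funpow_add comp_apply)
    also have "a + (b - a) = b" using ab(1) by simp
    finally show ?thesis using ab(2) by (simp only: g_def)
  qed
  have "x = (f ^^ (b - a)) x"
    by (rule inj_onD[OF inj_on_funpow[OF inj fD, of a] eq x funpow_in[OF fD x]])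
  moreover have "b - a > 0" using ab by simp
  ultimately show ?thesis by metis
qed

lemma orbit_A: "(f ^^ k) (f x) \<in> orbit f x"
  unfolding orbit_iff funpow_Suc_app[symmetric] by blast

lemma orbit_B: "n > 0 \<Longrightarrow> (f ^^ n) x = x \<Longrightarrow> (f ^^ k) x \<in> orbit f (f x)"
proof -
  assume n: "n > 0" "(f ^^ n) x = x"
  have "(f ^^ (k + n - 1)) (f x) = (f ^^ Suc (k + n - 1)) x" by (rule funpow_Suc_app[symmetric])
  also have "\<dots> = (f ^^ (k + n)) x" using n(1) by (simp del: funpow.simps)
  also have "\<dots> = (f ^^ k) x" using n(2) by (simp add: funpow_add del: funpow.simps)
  finally show ?thesis unfolding orbit_iff by metis
qed

lemma orbit_step:
  assumes fin: "finite D" and bij: "bij_betw f D D" and x: "x \<in> D"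
  shows "orbit f (f x) = orbit f x"
proof -
  obtain n where n: "n > 0" "(f ^^ n) x = x" using orbit_period[OF assms] by blast
  show ?thesis
  proof
    show "orbit f (f x) \<subseteq> orbit f x"
    proof
      fix y assume "y \<in> orbit f (f x)"
      then obtain k where "y = (f ^^ k) (f x)" unfolding orbit_iff by blast
      then show "y \<in> orbit f x" using orbit_A by simp
    qed
    show "orbit f x \<subseteq> orbit f (f x)"
    proof
      fix y assume "y \<in> orbit f x"
      then obtain k where "y = (f ^^ k) x" unfolding orbit_iff by blast
      then show "y \<in> orbit f (f x)" using orbit_B[OF n] by simp
    qed
  qed
qed

lemma orbit_mem_eq:
  assumes fin: "finite D" and bij: "bij_betw f D D" and x: "x \<in> D" and y: "y \<in> orbit f x"
  shows "orbit f y = orbit f x"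
proof -
  have fD: "f ` D \<subseteq> D" using bij by (auto simp: bij_betw_def)
  obtain k where y: "y = (f ^^ k) x" using y orbit_iff by metis
  have "orbit f ((f ^^ k) x) = orbit f x"
  proof (induction k)
    case 0 then show ?case by simp
  next
    case (Suc k)
    then show ?case using orbit_step[OF fin bij funpow_in[OF fD x, of k]] by simp
  qed
  then show ?thesis using y by simp
qed

lemma orbit_image:
  assumes fin: "finite D" and bij: "bij_betw f D D" and x: "x \<in> D"
  shows "f ` orbit f x = orbit f x"
proof
  show "f ` orbit f x \<subseteq> orbit f x"
  proof
    fix z assume "z \<in> f ` orbit f x"
    then obtain y where y: "y \<in> orbit f x" "z = f y" by blast
    then obtain k where "y = (f ^^ k) x" using orbit_iff by metis
    then have "z = (f ^^ Suc k) x" using y by simp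
    then show "z \<in> orbit f x" using orbit_iff by metis
  qed
  show "orbit f x \<subseteq> f ` orbit f x"
  proof
    fix z assume "z \<in> orbit f x"
    then have "z \<in> orbit f (f x)" using orbit_step[OF assms] by simp
    then obtain k where k: "z = (f ^^ k) (f x)" using orbit_iff by metis
    have "(f ^^ k) x \<in> orbit f x" using orbit_iff by metis
    moreover have "z = f ((f ^^ k) x)" using k funpow_Suc_app[of k f x] by simp
    ultimately show "z \<in> f ` orbit f x" by (rule rev_image_eqI)
  qed
qed

lemma orbit_finite: "finite D \<Longrightarrow> f ` D \<subseteq> D \<Longrightarrow> x \<in> D \<Longrightarrow> finite (orbit f x)"
  using orbit_sub finite_subset by metis

lemma chain_Cons:
  "(\<forall>i. Suc i < length (x # xs) \<longrightarrow> R ((x # xs) ! i) ((x # xs) ! Suc i)) \<longleftrightarrow>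
   ((xs \<noteq> [] \<longrightarrow> R x (xs ! 0)) \<and> (\<forall>i. Suc i < length xs \<longrightarrow> R (xs ! i) (xs ! Suc i)))"
  (is "?L \<longleftrightarrow> ?R")
proof
  assume L: ?L
  show ?R
  proof (intro conjI allI impI)
    assume "xs \<noteq> []" then show "R x (xs ! 0)" using L[rule_format, of 0] by simp
  next
    fix i assume "Suc i < length xs" then show "R (xs ! i) (xs ! Suc i)"
      using L[rule_format, of "Suc i"] by simp
  qed
next
  assume R: ?R
  show ?L
  proof (intro allI impI)
    fix i assume i: "Suc i < length (x # xs)"
    show "R ((x # xs) ! i) ((x # xs) ! Suc i)"
    proof (cases i)
      case 0 then show ?thesis using R i by simp
    next
      case (Suc j) then show ?thesis using R i by simp
    qed
  qed
qed

locale gm =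
  fixes D :: "'d set" and al p q :: "'d \<Rightarrow> 'd" and w :: "'d \<Rightarrow> real"
  assumes fin: "finite D" and Dne: "D \<noteq> {}"
    and al_D: "\<And>x. x \<in> D \<Longrightarrow> al x \<in> D"
    and al_al: "\<And>x. x \<in> D \<Longrightarrow> al (al x) = x"
    and al_ne: "\<And>x. x \<in> D \<Longrightarrow> al x \<noteq> x"
    and p_bij: "bij_betw p D D"
    and q_p: "\<And>x. x \<in> D \<Longrightarrow> q x = p (al x)"
    and conn: "\<And>x y. x \<in> D \<Longrightarrow> y \<in> D \<Longrightarrow>
        (x, y) \<in> ({(u, al u) | u. u \<in> D} \<union> {(u, p u) | u. u \<in> D})\<^sup>*"
    and w_pos: "\<And>x. x \<in> D \<Longrightarrow> w x > 0"
    and w_al: "\<And>x. x \<in> D \<Longrightarrow> w (al x) = w x"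
begin

lemma pD: "x \<in> D \<Longrightarrow> p x \<in> D"
  using p_bij by (auto simp: bij_betw_def)

lemma al_bij: "bij_betw al D D"
proof (rule bij_betwI[of al D D al])
  show "al \<in> D \<rightarrow> D" using al_D by blast
  show "al \<in> D \<rightarrow> D" using al_D by blast
qed (simp_all add: al_al)

lemma q_bij: "bij_betw q D D"
proof -
  have "bij_betw (p \<circ> al) D D" using bij_betw_trans[OF al_bij p_bij] .
  moreover have "\<And>x. x \<in> D \<Longrightarrow> (p \<circ> al) x = q x" using q_p by simp
  ultimately show ?thesis using bij_betw_cong by metis
qed

lemma qD: "x \<in> D \<Longrightarrow> q x \<in> D"
  using q_bij by (auto simp: bij_betw_def)

lemma p_q: "x \<in> D \<Longrightarrow> p x = q (al x)"
  using q_p[of "al x"] al_D al_al by simp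

lemma porb_eq: "x \<in> D \<Longrightarrow> y \<in> orbit p x \<Longrightarrow> orbit p y = orbit p x"
  by (rule orbit_mem_eq[OF fin p_bij])

lemma qorb_eq: "x \<in> D \<Longrightarrow> y \<in> orbit q x \<Longrightarrow> orbit q y = orbit q x"
  by (rule orbit_mem_eq[OF fin q_bij])

lemma porb_sub: "x \<in> D \<Longrightarrow> orbit p x \<subseteq> D"
  using orbit_sub[of p D x] p_bij by (auto simp: bij_betw_def)

lemma qorb_sub: "x \<in> D \<Longrightarrow> orbit q x \<subseteq> D"
  using orbit_sub[of q D x] q_bij by (auto simp: bij_betw_def)

lemma porb_mem_iff: "x \<in> D \<Longrightarrow> y \<in> D \<Longrightarrow> y \<in> orbit p x \<longleftrightarrow> orbit p y = orbit p x"
  using porb_eq orbit_self by metis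

lemma qorb_mem_iff: "x \<in> D \<Longrightarrow> y \<in> D \<Longrightarrow> y \<in> orbit q x \<longleftrightarrow> orbit q y = orbit q x"
  using qorb_eq orbit_self by metis

lemma porb_step: "x \<in> D \<Longrightarrow> orbit p (p x) = orbit p x"
  by (rule orbit_step[OF fin p_bij])

lemma porb_q: "x \<in> D \<Longrightarrow> orbit p (q x) = orbit p (al x)"
  using q_p porb_step al_D by simp

lemma porb_fin: "x \<in> D \<Longrightarrow> finite (orbit p x)"
  using porb_sub fin finite_subset by metis

lemma qorb_fin: "x \<in> D \<Longrightarrow> finite (orbit q x)"
  using qorb_sub fin finite_subset by metis

definition V :: "'d set set" where "V = (\<lambda>x. orbit p x) ` D"

lemma V_fin: "finite V" unfolding V_def using fin by simp

lemma sum_by_orbit: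
  "(\<Sum>x\<in>D. F (orbit p x) x) = (\<Sum>v\<in>V. \<Sum>x\<in>v. F v x)"
proof -
  have "(\<Sum>x\<in>D. F (orbit p x) x) = (\<Sum>v\<in>V. \<Sum>x | x \<in> D \<and> orbit p x = v. F (orbit p x) x)"
    by (rule sum.group[symmetric, OF fin V_fin]) (auto simp: V_def)
  also have "\<dots> = (\<Sum>v\<in>V. \<Sum>x\<in>v. F v x)"
  proof (rule sum.cong[OF refl])
    fix v assume "v \<in> V"
    then obtain y where y: "y \<in> D" "v = orbit p y" by (auto simp: V_def)
    have "{x. x \<in> D \<and> orbit p x = v} = v"
      using y porb_mem_iff porb_sub by blast
    then show "(\<Sum>x | x \<in> D \<and> orbit p x = v. F (orbit p x) x) = (\<Sum>x\<in>v. F v x)"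
      by (metis (mono_tags, lifting) mem_Collect_eq sum.cong)
  qed
  finally show ?thesis .
qed

lemma sum_al: "(\<Sum>x\<in>D. f (al x)) = (\<Sum>x\<in>D. f x)"
  by (rule sum.reindex_bij_betw[OF al_bij])

fun walk :: "'d set \<Rightarrow> 'd list \<Rightarrow> 'd set \<Rightarrow> bool" where
  "walk u [] v \<longleftrightarrow> u = v"
| "walk u (x # xs) v \<longleftrightarrow> x \<in> D \<and> orbit p x = u \<and> walk (orbit p (al x)) xs v"

definition gloop :: "'d list \<Rightarrow> bool" where
  "gloop xs \<longleftrightarrow> xs \<noteq> [] \<and> set xs \<subseteq> D \<and>
     (\<forall>i. Suc i < length xs \<longrightarrow> orbit p (al (xs ! i)) = orbit p (xs ! Suc i)) \<and>
     orbit p (al (last xs)) = orbit p (hd xs)"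

lemma walk_iff:
  "xs \<noteq> [] \<Longrightarrow> walk u xs v \<longleftrightarrow> set xs \<subseteq> D \<and> orbit p (hd xs) = u \<and> orbit p (al (last xs)) = v \<and>
     (\<forall>i. Suc i < length xs \<longrightarrow> orbit p (al (xs ! i)) = orbit p (xs ! Suc i))"
proof (induction xs arbitrary: u)
  case Nil then show ?case by simp
next
  case (Cons x xs)
  show ?case
  proof (cases "xs = []")
    case True then show ?thesis by auto
  next
    case False
    have "walk u (x # xs) v \<longleftrightarrow> x \<in> D \<and> orbit p x = u \<and> walk (orbit p (al x)) xs v" by simp
    also have "\<dots> \<longleftrightarrow> x \<in> D \<and> orbit p x = u \<and> (set xs \<subseteq> D \<and> orbit p (hd xs) = orbit p (al x) \<and>
        orbit p (al (last xs)) = v \<and>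
        (\<forall>i. Suc i < length xs \<longrightarrow> orbit p (al (xs ! i)) = orbit p (xs ! Suc i)))"
      using Cons.IH[OF False] by simp
    also have "\<dots> \<longleftrightarrow> set (x # xs) \<subseteq> D \<and> orbit p (hd (x # xs)) = u \<and> orbit p (al (last (x # xs))) = v \<and>
     (\<forall>i. Suc i < length (x # xs) \<longrightarrow> orbit p (al ((x # xs) ! i)) = orbit p ((x # xs) ! Suc i))"
    proof -
      have ch: "(\<forall>i. Suc i < length (x # xs) \<longrightarrow> orbit p (al ((x # xs) ! i)) = orbit p ((x # xs) ! Suc i))
        \<longleftrightarrow> orbit p (al x) = orbit p (xs ! 0) \<and>
           (\<forall>i. Suc i < length xs \<longrightarrow> orbit p (al (xs ! i)) = orbit p (xs ! Suc i))"
        using chain_Cons[where R="\<lambda>a b. orbit p (al a) = orbit p b" and x=x and xs=xs] False by simp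
      have "hd xs = xs ! 0" using False by (simp add: hd_conv_nth)
      then show ?thesis unfolding ch using False by auto
    qed
    finally show ?thesis .
  qed
qed

lemma gloop_walk: "gloop xs \<longleftrightarrow> xs \<noteq> [] \<and> walk (orbit p (hd xs)) xs (orbit p (hd xs))"
  unfolding gloop_def using walk_iff by auto

lemma walk_D: "walk u xs v \<Longrightarrow> set xs \<subseteq> D"
  by (induction xs arbitrary: u) auto

lemma walk_append: "walk u xs v \<Longrightarrow> walk v ys z \<Longrightarrow> walk u (xs @ ys) z"
  by (induction xs arbitrary: u) auto

lemma walk_rev: "walk u xs v \<Longrightarrow> walk v (rev (map al xs)) u"
proof (induction xs arbitrary: u)
  case Nil then show ?case by simp
next
  case (Cons x xs)
  then have x: "x \<in> D" "orbit p x = u" "walk (orbit p (al x)) xs v" by auto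
  have "walk v (rev (map al xs)) (orbit p (al x))" using Cons.IH x(3) .
  moreover have "walk (orbit p (al x)) [al x] u" using x al_D al_al by simp
  ultimately show ?case using walk_append by simp
qed

lemma walk_tele:
  "walk u xs v \<Longrightarrow> (\<Sum>x\<leftarrow>xs. h (orbit p (al x)) - h (orbit p x)) = h v - (h u :: real)"
  by (induction xs arbitrary: u) auto

lemma sum_rev_al:
  assumes "set xs \<subseteq> D" and odd: "\<forall>x\<in>D. c (al x) = - c x"
  shows "(\<Sum>x\<leftarrow>rev (map al xs). c x) = - (\<Sum>x\<leftarrow>xs. (c x :: real))"
  using assms(1)
proof (induction xs)
  case Nil then show ?case by simp
next
  case (Cons x xs) then show ?case using odd by simp
qed


lemma potential:
  fixes c :: "'d \<Rightarrow> real"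
  assumes odd: "\<forall>x\<in>D. c (al x) = - c x"
    and okal: "\<forall>x\<in>D. ok (al x) = ok x"
    and per: "\<forall>xs. gloop xs \<and> (\<forall>x\<in>set xs. ok x) \<longrightarrow> (\<Sum>x\<leftarrow>xs. c x) = 0"
  shows "\<exists>h. \<forall>x\<in>D. ok x \<longrightarrow> c x = h (orbit p (al x)) - h (orbit p x)"
proof -
  define reach where "reach u v \<longleftrightarrow> (\<exists>xs. walk u xs v \<and> (\<forall>x\<in>set xs. ok x))" for u v
  have refl: "reach u u" for u unfolding reach_def by (intro exI[of _ "[]"]) simp
  have trans: "reach u v \<Longrightarrow> reach v z \<Longrightarrow> reach u z" for u v z
    unfolding reach_def using walk_append by (metis Un_iff set_append)
  define root where "root v = (SOME u. reach u v)" for v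
  define pth where "pth v = (SOME xs. walk (root v) xs v \<and> (\<forall>x\<in>set xs. ok x))" for v
  define h where "h v = (\<Sum>x\<leftarrow>pth v. c x)" for v
  have root: "reach (root v) v" for v unfolding root_def using refl by (rule someI)
  have pth: "walk (root v) (pth v) v \<and> (\<forall>x\<in>set (pth v). ok x)" for v
    unfolding pth_def using root[of v] unfolding reach_def by (rule someI_ex)
  show ?thesis
  proof (intro exI ballI impI)
    fix x assume x: "x \<in> D" and okx: "ok x"
    define u where "u = orbit p x"
    define u' where "u' = orbit p (al x)"
    have w1: "walk u [x] u'" using x by (simp add: u_def u'_def)
    have w2: "walk u' [al x] u" using x al_D al_al by (simp add: u_def u'_def)
    have r1: "reach u u'" unfolding reach_def using w1 okx by (intro exI[of _ "[x]"]) simp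
    have r2: "reach u' u" unfolding reach_def using w2 okx okal x by (intro exI[of _ "[al x]"]) simp
    have "\<forall>a. reach a u = reach a u'" using trans r1 r2 by blast
    then have "(\<lambda>a. reach a u) = (\<lambda>a. reach a u')" by (intro ext) blast
    then have rr: "root u = root u'" unfolding root_def by (rule arg_cong[of _ _ Eps])
    define ys where "ys = pth u @ [x] @ rev (map al (pth u'))"
    have wy: "walk (root u) ys (root u)"
      unfolding ys_def
      by (rule walk_append[OF pth[of u, THEN conjunct1] walk_append[OF w1 walk_rev]])
        (use pth[of u'] rr in simp)
    have ne: "ys \<noteq> []" unfolding ys_def by simp
    have "orbit p (hd ys) = root u" using walk_iff[OF ne] wy by blast
    then have gl: "gloop ys" using gloop_walk ne wy by simp
    have okys: "\<forall>y\<in>set ys. ok y"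
    proof
      fix y assume "y \<in> set ys"
      then consider "y \<in> set (pth u)" | "y = x" | "y \<in> set (rev (map al (pth u')))"
        unfolding ys_def by auto
      then show "ok y"
      proof cases
        case 1 then show ?thesis using pth by blast
      next
        case 2 then show ?thesis using okx by simp
      next
        case 3
        then obtain z where z: "z \<in> set (pth u')" "y = al z" by auto
        have "z \<in> D" using walk_D pth z(1) by blast
        then show ?thesis using pth z okal by metis
      qed
    qed
    have "(\<Sum>y\<leftarrow>ys. c y) = 0" using per gl okys by blast
    moreover have "(\<Sum>y\<leftarrow>ys. c y) = h u + c x - h u'"
    proof -
      have "set (pth u') \<subseteq> D" using walk_D pth by blast
      then have "(\<Sum>y\<leftarrow>rev (map al (pth u')). c y) = - h u'"
        unfolding h_def using sum_rev_al odd by blast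
      then show ?thesis unfolding ys_def h_def by simp
    qed
    ultimately show "c x = h (orbit p (al x)) - h (orbit p x)" unfolding u_def u'_def by simp
  qed
qed

lemma energy:
  fixes c :: "'d \<Rightarrow> real"
  assumes odd: "\<forall>x\<in>D. c (al x) = - c x"
    and cocl: "\<forall>y\<in>D. (\<Sum>x\<in>orbit p y. w x * c x) = 0"
    and ex: "\<forall>x\<in>D. c x = h (orbit p (al x)) - h (orbit p x)"
  shows "\<forall>x\<in>D. c x = 0"
proof -
  have S1: "(\<Sum>x\<in>D. w x * c x * h (orbit p (al x))) = - (\<Sum>x\<in>D. w x * c x * h (orbit p x))"
  proof -
    have "(\<Sum>x\<in>D. w x * c x * h (orbit p (al x))) = (\<Sum>x\<in>D. w (al x) * c (al x) * h (orbit p (al (al x))))"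
      by (rule sum_al[symmetric])
    also have "\<dots> = (\<Sum>x\<in>D. - (w x * c x * h (orbit p x)))"
      by (rule sum.cong[OF refl]) (simp add: w_al odd al_al)
    finally show ?thesis by (simp add: sum_negf)
  qed
  have S2: "(\<Sum>x\<in>D. w x * c x * h (orbit p x)) = 0"
  proof -
    have "(\<Sum>x\<in>D. w x * c x * h (orbit p x)) = (\<Sum>v\<in>V. \<Sum>x\<in>v. w x * c x * h v)"
      using sum_by_orbit[of "\<lambda>v x. w x * c x * h v"] by simp
    also have "\<dots> = (\<Sum>v\<in>V. h v * (\<Sum>x\<in>v. w x * c x))"
    proof (rule sum.cong[OF refl])
      fix v
      have "(\<Sum>x\<in>v. w x * c x * h v) = (\<Sum>x\<in>v. w x * c x) * h v" by (rule sum_distrib_right[symmetric])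
      then show "(\<Sum>x\<in>v. w x * c x * h v) = h v * (\<Sum>x\<in>v. w x * c x)" by (simp only: mult.commute)
    qed
    also have "\<dots> = 0"
    proof (rule sum.neutral, rule ballI)
      fix v assume "v \<in> V"
      then obtain y where "y \<in> D" "v = orbit p y" by (auto simp: V_def)
      then show "h v * (\<Sum>x\<in>v. w x * c x) = 0" using cocl by simp
    qed
    finally show ?thesis .
  qed
  have E: "(\<Sum>x\<in>D. w x * c x * c x) = 0"
  proof -
    have "(\<Sum>x\<in>D. w x * c x * c x) = (\<Sum>x\<in>D. w x * c x * h (orbit p (al x)) - w x * c x * h (orbit p x))"
    proof (rule sum.cong[OF refl])
      fix x assume x: "x \<in> D"
      have "w x * c x * c x = w x * c x * (h (orbit p (al x)) - h (orbit p x))" using ex x by simp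
      then show "w x * c x * c x = w x * c x * h (orbit p (al x)) - w x * c x * h (orbit p x)"
        by (simp only: right_diff_distrib)
    qed
    also have "\<dots> = 0" using S1 S2 by (simp add: sum_subtractf)
    finally show ?thesis .
  qed
  have nn: "\<forall>x\<in>D. 0 \<le> w x * c x * c x" using w_pos by (simp add: mult.assoc less_imp_le)
  have iff: "(\<Sum>x\<in>D. w x * c x * c x) = 0 \<longleftrightarrow> (\<forall>x\<in>D. w x * c x * c x = 0)"
    by (rule sum_nonneg_eq_0_iff[OF fin]) (use nn in blast)
  have "\<forall>x\<in>D. w x * c x * c x = 0" using iff E by simp
  then show ?thesis
  proof (intro ballI)
    fix x assume a: "\<forall>x\<in>D. w x * c x * c x = 0" and x: "x \<in> D"
    have "w x \<noteq> 0" using w_pos[OF x] by simp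
    moreover have "w x * c x * c x = 0" using a x by blast
    ultimately show "c x = 0" by simp
  qed
qed

lemma zero_form:
  fixes c :: "'d \<Rightarrow> real"
  assumes odd: "\<forall>x\<in>D. c (al x) = - c x"
    and cocl: "\<forall>y\<in>D. (\<Sum>x\<in>orbit p y. w x * c x) = 0"
    and per: "\<forall>xs. gloop xs \<longrightarrow> (\<Sum>x\<leftarrow>xs. c x) = 0"
  shows "\<forall>x\<in>D. c x = 0"
proof -
  obtain h where h: "\<forall>x\<in>D. True \<longrightarrow> c x = h (orbit p (al x)) - h (orbit p x)"
    using potential[OF odd, of "\<lambda>_. True"] per by auto
  show ?thesis using energy[OF odd cocl] h by simp
qed

lemma laplace:
  assumes g0: "(\<Sum>v\<in>V. g v) = 0"
  shows "\<exists>h. \<forall>v\<in>V. (\<Sum>x\<in>v. w x * (h (orbit p (al x)) - h v)) = g v"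
proof -
  define a where "a v u = (\<Sum>x\<in>v. w x * ((if orbit p (al x) = u then 1 else 0) - (if u = v then 1 else 0))) + 1"
    for v u :: "'d set"
  have Vsub: "v \<subseteq> D" if "v \<in> V" for v using that porb_sub by (auto simp: V_def)
  have Vfin: "finite v" if "v \<in> V" for v using Vsub[OF that] fin finite_subset by blast
  have hdV: "orbit p (al x) \<in> V" if "x \<in> v" "v \<in> V" for x v
    using Vsub[OF that(2)] that(1) al_D by (auto simp: V_def)
  have aexp: "(\<Sum>u\<in>V. a v u * h u) = (\<Sum>x\<in>v. w x * (h (orbit p (al x)) - h v)) + (\<Sum>u\<in>V. h u)"
    if v: "v \<in> V" for v h
  proof -
    have "(\<Sum>u\<in>V. a v u * h u) = (\<Sum>u\<in>V. \<Sum>x\<in>v. w x * ((if orbit p (al x) = u then h u else 0) - (if u = v then h u else 0)))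
       + (\<Sum>u\<in>V. h u)"
    proof -
      have "a v u * h u = (\<Sum>x\<in>v. w x * ((if orbit p (al x) = u then h u else 0) - (if u = v then h u else 0))) + h u"
        for u
      proof -
        have "a v u * h u = (\<Sum>x\<in>v. w x * ((if orbit p (al x) = u then 1 else 0) - (if u = v then 1 else 0))) * h u + h u"
          unfolding a_def by (simp add: distrib_right)
        also have "(\<Sum>x\<in>v. w x * ((if orbit p (al x) = u then 1 else 0) - (if u = v then 1 else 0))) * h u
          = (\<Sum>x\<in>v. w x * ((if orbit p (al x) = u then h u else 0) - (if u = v then h u else 0)))"
          unfolding sum_distrib_right by (rule sum.cong[OF refl]) (simp add: algebra_simps)
        finally show ?thesis .
      qed
      then show ?thesis by (simp add: sum.distrib)
    qed
    also have "(\<Sum>u\<in>V. \<Sum>x\<in>v. w x * ((if orbit p (al x) = u then h u else 0) - (if u = v then h u else 0)))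
       = (\<Sum>x\<in>v. \<Sum>u\<in>V. w x * ((if orbit p (al x) = u then h u else 0) - (if u = v then h u else 0)))"
      by (rule sum.swap)
    also have "\<dots> = (\<Sum>x\<in>v. w x * (h (orbit p (al x)) - h v))"
    proof (rule sum.cong[OF refl])
      fix x assume x: "x \<in> v"
      have "(\<Sum>u\<in>V. w x * ((if orbit p (al x) = u then h u else 0) - (if u = v then h u else 0)))
          = w x * ((\<Sum>u\<in>V. if orbit p (al x) = u then h u else 0) - (\<Sum>u\<in>V. if u = v then h u else 0))"
        by (simp only: sum_subtractf[symmetric] sum_distrib_left)
      also have "\<dots> = w x * (h (orbit p (al x)) - h v)"
        using hdV[OF x v] v V_fin by (simp add: sum.delta sum.delta')
      finally show "(\<Sum>u\<in>V. w x * ((if orbit p (al x) = u then h u else 0) - (if u = v then h u else 0)))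
          = w x * (h (orbit p (al x)) - h v)" .
    qed
    finally show ?thesis .
  qed
  have Lsum: "(\<Sum>v\<in>V. \<Sum>x\<in>v. w x * (h (orbit p (al x)) - h v)) = 0" for h :: "'d set \<Rightarrow> real"
  proof -
    have "(\<Sum>v\<in>V. \<Sum>x\<in>v. w x * (h (orbit p (al x)) - h v)) = (\<Sum>x\<in>D. w x * (h (orbit p (al x)) - h (orbit p x)))"
      using sum_by_orbit[of "\<lambda>v x. w x * (h (orbit p (al x)) - h v)"] by simp
    also have "\<dots> = (\<Sum>x\<in>D. w x * h (orbit p (al x))) - (\<Sum>x\<in>D. w x * h (orbit p x))"
      by (simp add: right_diff_distrib sum_subtractf)
    also have "(\<Sum>x\<in>D. w x * h (orbit p (al x))) = (\<Sum>x\<in>D. w (al x) * h (orbit p (al (al x))))"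
      by (rule sum_al[symmetric])
    also have "\<dots> = (\<Sum>x\<in>D. w x * h (orbit p x))"
      by (rule sum.cong[OF refl]) (simp add: w_al al_al)
    finally show ?thesis by simp
  qed
  have cardV: "card V > 0" using V_fin Dne by (auto simp: V_def card_gt_0_iff)
  have inj: "\<forall>v\<in>V. h v = 0" if H: "\<forall>v\<in>V. (\<Sum>u\<in>V. a v u * h u) = 0" for h
  proof -
    define S where "S = (\<Sum>u\<in>V. h u)"
    have L: "\<forall>v\<in>V. (\<Sum>x\<in>v. w x * (h (orbit p (al x)) - h v)) = - S"
    proof
      fix v assume v: "v \<in> V"
      have "(\<Sum>x\<in>v. w x * (h (orbit p (al x)) - h v)) + S = 0"
        using H v aexp[OF v, of h] unfolding S_def by simp
      then show "(\<Sum>x\<in>v. w x * (h (orbit p (al x)) - h v)) = - S" by linarith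
    qed
    have "(\<Sum>v\<in>V. \<Sum>x\<in>v. w x * (h (orbit p (al x)) - h v)) = (\<Sum>v\<in>V. - S)"
      using L by (intro sum.cong) auto
    then have "real (card V) * S = 0" using Lsum by simp
    then have S0: "S = 0" using cardV by simp
    define c where "c x = h (orbit p (al x)) - h (orbit p x)" for x
    have codd: "\<forall>x\<in>D. c (al x) = - c x" unfolding c_def by (simp add: al_al)
    have ccocl: "\<forall>y\<in>D. (\<Sum>x\<in>orbit p y. w x * c x) = 0"
    proof
      fix y assume y: "y \<in> D"
      have vV: "orbit p y \<in> V" using y by (simp add: V_def)
      have "(\<Sum>x\<in>orbit p y. w x * c x) = (\<Sum>x\<in>orbit p y. w x * (h (orbit p (al x)) - h (orbit p y)))"
      proof (rule sum.cong[OF refl])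
        fix x assume "x \<in> orbit p y"
        then have "orbit p x = orbit p y" using porb_eq y by blast
        then show "w x * c x = w x * (h (orbit p (al x)) - h (orbit p y))" by (simp add: c_def)
      qed
      also have "\<dots> = 0" using L vV S0 by simp
      finally show "(\<Sum>x\<in>orbit p y. w x * c x) = 0" .
    qed
    have cex: "\<forall>x\<in>D. c x = h (orbit p (al x)) - h (orbit p x)" by (simp add: c_def)
    have c0: "\<forall>x\<in>D. c x = 0" using energy[OF codd ccocl cex] .
    have const: "h (orbit p y) = h (orbit p x)" if x: "x \<in> D" and y: "y \<in> D" for x y
    proof -
      have "(x, y) \<in> ({(u, al u) | u. u \<in> D} \<union> {(u, p u) | u. u \<in> D})\<^sup>*" using conn x y .
      then show ?thesis
      proof (induction rule: rtrancl_induct)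
        case base then show ?case by simp
      next
        case (step y z)
        from step.hyps(2) show ?case
        proof
          assume "(y, z) \<in> {(u, al u) | u. u \<in> D}"
          then obtain u where u: "u \<in> D" "y = u" "z = al u" by blast
          have "c u = 0" using c0 u(1) by blast
          then have "h (orbit p (al u)) = h (orbit p u)" by (simp add: c_def)
          then show ?thesis using step.IH u by simp
        next
          assume "(y, z) \<in> {(u, p u) | u. u \<in> D}"
          then obtain u where u: "u \<in> D" "y = u" "z = p u" by blast
          then show ?thesis using porb_step step.IH by simp
        qed
      qed
    qed
    obtain x0 where x0: "x0 \<in> D" using Dne by blast
    have hc: "\<forall>v\<in>V. h v = h (orbit p x0)"
    proof
      fix v assume "v \<in> V"
      then obtain y where "y \<in> D" "v = orbit p y" by (auto simp: V_def)
      then show "h v = h (orbit p x0)" using const[OF x0] by simp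
    qed
    then have "S = real (card V) * h (orbit p x0)" unfolding S_def by simp
    then have "h (orbit p x0) = 0" using S0 cardV by simp
    then show ?thesis using hc by simp
  qed
  obtain h where h: "\<forall>v\<in>V. (\<Sum>u\<in>V. a v u * h u) = g v"
    using linsys_solvable[OF V_fin inj, where g=g] by blast
  have "(\<Sum>v\<in>V. (\<Sum>x\<in>v. w x * (h (orbit p (al x)) - h v)) + (\<Sum>u\<in>V. h u)) = (\<Sum>v\<in>V. g v)"
    using h aexp by simp
  then have "real (card V) * (\<Sum>u\<in>V. h u) = 0" using Lsum g0 by (simp add: sum.distrib)
  then have "(\<Sum>u\<in>V. h u) = 0" using cardV by simp
  then show ?thesis using h aexp by (intro exI[of _ h]) simp
qed


lemma dh_closed:
  fixes h :: "'d set \<Rightarrow> real"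
  assumes y: "y \<in> D"
  shows "(\<Sum>x\<in>orbit q y. h (orbit p (al x)) - h (orbit p x)) = 0"
proof -
  have sub: "orbit q y \<subseteq> D" using qorb_sub[OF y] .
  have inj: "inj_on q (orbit q y)" using q_bij sub by (auto simp: bij_betw_def intro: inj_on_subset)
  have "(\<Sum>x\<in>orbit q y. h (orbit p (al x))) = (\<Sum>x\<in>orbit q y. h (orbit p (q x)))"
  proof (rule sum.cong[OF refl])
    fix x assume "x \<in> orbit q y" then have "x \<in> D" using sub by blast
    then show "h (orbit p (al x)) = h (orbit p (q x))" using porb_q by simp
  qed
  also have "\<dots> = (\<Sum>x\<in>q ` orbit q y. h (orbit p x))"
    by (rule sum.reindex[OF inj, symmetric, unfolded comp_def])
  also have "q ` orbit q y = orbit q y" by (rule orbit_image[OF fin q_bij y])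
  finally show ?thesis by (simp add: sum_subtractf)
qed

lemma sum_over_sub:
  fixes g :: "'d \<Rightarrow> real"
  assumes "S \<subseteq> D"
  shows "(\<Sum>x\<in>S. g x) = (\<Sum>x\<in>D. if x \<in> S then g x else 0)"
proof -
  have "{x \<in> D. x \<in> S} = S" using assms by blast
  then show ?thesis using sum.inter_filter[OF fin, of g "\<lambda>x. x \<in> S"] by simp
qed

end

lemma sum_list_divide: "(\<Sum>x\<leftarrow>xs. f x / (e::real)) = (\<Sum>x\<leftarrow>xs. f x) / e"
  by (induction xs) (auto simp: add_divide_distrib)

lemma sum_list_nth: "(\<Sum>x\<leftarrow>xs. f x) = (\<Sum>i<length xs. f (xs ! i))"
  by (simp add: sum_list_sum_nth atLeast0LessThan)

lemma sum_set_nth: "distinct xs \<Longrightarrow> (\<Sum>x\<in>set xs. f x) = (\<Sum>i<length xs. f (xs ! i))"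
  using sum.reindex_bij_betw[OF bij_betw_nth[of xs "{..<length xs}" "set xs"], of f] by simp

definition nx :: "nat \<Rightarrow> nat \<Rightarrow> nat" where "nx n i = (if Suc i = n then 0 else Suc i)"

lemma nx_bij: "0 < n \<Longrightarrow> bij_betw (nx n) {..<n} {..<n}"
proof (rule bij_betw_byWitness[where f' = "\<lambda>j. if j = 0 then n - 1 else j - 1"])
  assume n: "0 < n"
  show "\<forall>a\<in>{..<n}. (if nx n a = 0 then n - 1 else nx n a - 1) = a"
    using n by (auto simp: nx_def)
  show "\<forall>a'\<in>{..<n}. nx n (if a' = 0 then n - 1 else a' - 1) = a'"
    using n by (auto simp: nx_def)
  show "nx n ` {..<n} \<subseteq> {..<n}" using n by (auto simp: nx_def)
  show "(\<lambda>j. if j = 0 then n - 1 else j - 1) ` {..<n} \<subseteq> {..<n}" using n by auto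
qed

lemma nx_lt: "i < n \<Longrightarrow> nx n i < n" by (auto simp: nx_def)

lemma nx_inj: "i < n \<Longrightarrow> j < n \<Longrightarrow> nx n i = nx n j \<Longrightarrow> i = j"
  by (auto simp: nx_def split: if_splits)

locale gmAB = gm +
  fixes A B
  assumes A_ne: "A \<noteq> []" and A_D: "set A \<subseteq> D"
    and A_chain: "\<forall>i. Suc i < length A \<longrightarrow> orbit q (al (A ! i)) = orbit q (A ! Suc i)"
    and A_close: "orbit q (al (last A)) = orbit q (hd A)"
    and A_dist: "\<forall>i j. i < length A \<longrightarrow> j < length A \<longrightarrow> i \<noteq> j \<longrightarrow> A ! i \<noteq> A ! j \<and> A ! i \<noteq> al (A ! j)"
    and A_tails: "distinct (map (orbit q) A)"
    and B_loop: "gloop B"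
    and B_dist: "\<forall>i j. i < length B \<longrightarrow> j < length B \<longrightarrow> i \<noteq> j \<longrightarrow> B ! i \<noteq> B ! j \<and> B ! i \<noteq> al (B ! j)"
    and cross: "card {i. i < length A \<and> (\<exists>y\<in>set B. y = A ! i \<or> y = al (A ! i))} = 1"
begin

abbreviation "n \<equiv> length A"

definition cr :: "_ \<Rightarrow> bool" where "cr x \<longleftrightarrow> x \<in> set A \<or> al x \<in> set A"

definition eta :: "_ \<Rightarrow> real" where
  "eta x = (if x \<in> set A then 1 else 0) - (if al x \<in> set A then 1 else 0)"

lemma n_pos: "0 < n" using A_ne by simp

lemma A_nth_D: "i < n \<Longrightarrow> A ! i \<in> D" using A_D by auto

lemma A_distinct: "distinct A"
  unfolding distinct_conv_nth using A_dist by blast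

lemma A_next: "i < n \<Longrightarrow> orbit q (al (A ! i)) = orbit q (A ! nx n i)"
proof (cases "Suc i = n")
  case True
  assume i: "i < n"
  have "n - 1 = i" using True by simp
  then have "last A = A ! i" using A_ne by (simp add: last_conv_nth)
  moreover have "hd A = A ! 0" using A_ne by (simp add: hd_conv_nth)
  ultimately show ?thesis using A_close True by (simp add: nx_def)
next
  case False
  assume i: "i < n"
  then have "Suc i < n" using False by simp
  then show ?thesis using A_chain False by (simp add: nx_def)
qed

lemma A_excl: "x \<in> set A \<Longrightarrow> al x \<notin> set A"
proof
  assume x: "x \<in> set A" and ax: "al x \<in> set A"
  obtain i where i: "i < n" "x = A ! i" using x by (auto simp: in_set_conv_nth)
  obtain j where j: "j < n" "al x = A ! j" using ax by (auto simp: in_set_conv_nth)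
  show False
  proof (cases "i = j")
    case True
    then show False using i j al_ne A_nth_D by metis
  next
    case False
    then have "A ! j \<noteq> al (A ! i)" using A_dist i j by blast
    then show False using i j by simp
  qed
qed

lemma eta_odd: "x \<in> D \<Longrightarrow> eta (al x) = - eta x"
  unfolding eta_def using al_al by simp

lemma cr_al: "x \<in> D \<Longrightarrow> cr (al x) = cr x"
  unfolding cr_def using al_al by auto

lemma eta_zero: "\<not> cr x \<Longrightarrow> eta x = 0"
  unfolding cr_def eta_def by simp

lemma eta_nz: "cr x \<Longrightarrow> eta x \<noteq> 0"
  unfolding cr_def eta_def using A_excl by (metis add.inverse_neutral diff_0 diff_zero zero_neq_neg_one zero_neq_one)

lemma qorb_is: "y \<in> D \<Longrightarrow> x \<in> D \<Longrightarrow> (x \<in> orbit q y) = (orbit q x = orbit q y)"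
  by (rule qorb_mem_iff)

lemma ind_A:
  fixes f :: "_ \<Rightarrow> real"
  assumes y: "y \<in> D"
  shows "(\<Sum>x\<in>orbit q y. if x \<in> set A then f x else 0) =
         (\<Sum>i<n. if orbit q (A ! i) = orbit q y then f (A ! i) else 0)"
proof -
  have "(\<Sum>x\<in>orbit q y. if x \<in> set A then f x else 0) =
        (\<Sum>x\<in>D. if x \<in> orbit q y then (if x \<in> set A then f x else 0) else 0)"
    by (rule sum_over_sub[OF qorb_sub[OF y]])
  also have "\<dots> = (\<Sum>x\<in>D. if x \<in> set A then (if x \<in> orbit q y then f x else 0) else 0)"
    by (rule sum.cong[OF refl]) simp
  also have "\<dots> = (\<Sum>x\<in>set A. if x \<in> orbit q y then f x else 0)"
    by (rule sum_over_sub[OF A_D, symmetric])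
  also have "\<dots> = (\<Sum>i<n. if A ! i \<in> orbit q y then f (A ! i) else 0)"
    by (rule sum_set_nth[OF A_distinct])
  also have "\<dots> = (\<Sum>i<n. if orbit q (A ! i) = orbit q y then f (A ! i) else 0)"
  proof (rule sum.cong[OF refl])
    fix i assume "i \<in> {..<n}"
    then have "A ! i \<in> D" using A_nth_D by simp
    then show "(if A ! i \<in> orbit q y then f (A ! i) else 0) =
          (if orbit q (A ! i) = orbit q y then f (A ! i) else 0)" using qorb_is[OF y] by simp
  qed
  finally show ?thesis .
qed

lemma ind_alA:
  fixes f :: "_ \<Rightarrow> real"
  assumes y: "y \<in> D"
  shows "(\<Sum>x\<in>orbit q y. if al x \<in> set A then f x else 0) =
         (\<Sum>i<n. if orbit q (A ! nx n i) = orbit q y then f (al (A ! i)) else 0)"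
proof -
  have "(\<Sum>x\<in>orbit q y. if al x \<in> set A then f x else 0) =
        (\<Sum>x\<in>D. if x \<in> orbit q y then (if al x \<in> set A then f x else 0) else 0)"
    by (rule sum_over_sub[OF qorb_sub[OF y]])
  also have "\<dots> = (\<Sum>x\<in>D. if al x \<in> orbit q y then (if al (al x) \<in> set A then f (al x) else 0) else 0)"
    by (rule sum_al[symmetric])
  also have "\<dots> = (\<Sum>x\<in>D. if x \<in> set A then (if al x \<in> orbit q y then f (al x) else 0) else 0)"
    by (rule sum.cong[OF refl]) (simp add: al_al)
  also have "\<dots> = (\<Sum>x\<in>set A. if al x \<in> orbit q y then f (al x) else 0)"
    by (rule sum_over_sub[OF A_D, symmetric])
  also have "\<dots> = (\<Sum>i<n. if al (A ! i) \<in> orbit q y then f (al (A ! i)) else 0)"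
    by (rule sum_set_nth[OF A_distinct])
  also have "\<dots> = (\<Sum>i<n. if orbit q (A ! nx n i) = orbit q y then f (al (A ! i)) else 0)"
  proof (rule sum.cong[OF refl])
    fix i assume "i \<in> {..<n}"
    then have i: "i < n" by simp
    then have "al (A ! i) \<in> D" using A_nth_D al_D by simp
    then have "al (A ! i) \<in> orbit q y \<longleftrightarrow> orbit q (al (A ! i)) = orbit q y" using qorb_is[OF y] by simp
    then show "(if al (A ! i) \<in> orbit q y then f (al (A ! i)) else 0) =
          (if orbit q (A ! nx n i) = orbit q y then f (al (A ! i)) else 0)" using A_next[OF i] by simp
  qed
  finally show ?thesis .
qed

lemma eta_closed:
  assumes y: "y \<in> D"
  shows "(\<Sum>x\<in>orbit q y. eta x) = 0"
proof -
  have "(\<Sum>x\<in>orbit q y. eta x) = (\<Sum>x\<in>orbit q y. if x \<in> set A then 1 else 0) -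
        (\<Sum>x\<in>orbit q y. if al x \<in> set A then 1 else 0)"
    unfolding eta_def by (rule sum_subtractf)
  also have "(\<Sum>x\<in>orbit q y. if x \<in> set A then 1 else 0) =
      (\<Sum>i<n. if orbit q (A ! i) = orbit q y then 1 else (0::real))"
    using ind_A[OF y, of "\<lambda>_. 1"] by simp
  also have "(\<Sum>x\<in>orbit q y. if al x \<in> set A then 1 else 0) =
      (\<Sum>i<n. if orbit q (A ! nx n i) = orbit q y then 1 else (0::real))"
    using ind_alA[OF y, of "\<lambda>_. 1"] by simp
  also have "\<dots> = (\<Sum>i<n. if orbit q (A ! i) = orbit q y then 1 else (0::real))"
    using sum.reindex_bij_betw[OF nx_bij[OF n_pos], of "\<lambda>i. if orbit q (A ! i) = orbit q y then 1 else (0::real)"]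
    by simp
  finally show ?thesis by simp
qed


lemma A_tail_inj: "i < n \<Longrightarrow> j < n \<Longrightarrow> orbit q (A ! i) = orbit q (A ! j) \<Longrightarrow> i = j"
  using A_tails by (auto simp: distinct_conv_nth)

lemma propagate:
  fixes k :: "_ \<Rightarrow> real"
  assumes odd: "\<forall>x\<in>D. k (al x) = - k x"
    and supp: "\<forall>x\<in>D. \<not> cr x \<longrightarrow> k x = 0"
    and closed: "\<forall>y\<in>D. (\<Sum>x\<in>orbit q y. k x) = 0"
  shows "\<forall>x\<in>D. k x = k (A ! 0) * eta x"
proof -
  have step: "k (A ! nx n j) = k (A ! j)" if j: "j < n" for j
  proof -
    define y where "y = A ! nx n j"
    have y: "y \<in> D" using A_nth_D nx_lt[OF j] by (simp add: y_def)
    have split: "k x = (if x \<in> set A then k x else 0) + (if al x \<in> set A then k x else 0)" if x: "x \<in> D" for x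
    proof (cases "cr x")
      case True then show ?thesis using A_excl unfolding cr_def by auto
    next
      case False then show ?thesis using supp x unfolding cr_def by auto
    qed
    have "0 = (\<Sum>x\<in>orbit q y. k x)" using closed y by simp
    also have "\<dots> = (\<Sum>x\<in>orbit q y. (if x \<in> set A then k x else 0) + (if al x \<in> set A then k x else 0))"
    proof (rule sum.cong[OF refl])
      fix x assume "x \<in> orbit q y" then have "x \<in> D" using qorb_sub[OF y] by blast
      then show "k x = (if x \<in> set A then k x else 0) + (if al x \<in> set A then k x else 0)" by (rule split)
    qed
    also have "\<dots> = (\<Sum>x\<in>orbit q y. if x \<in> set A then k x else 0) + (\<Sum>x\<in>orbit q y. if al x \<in> set A then k x else 0)"
      by (rule sum.distrib)
    also have "(\<Sum>x\<in>orbit q y. if x \<in> set A then k x else 0) = (\<Sum>i<n. if orbit q (A ! i) = orbit q y then k (A ! i) else 0)"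
      by (rule ind_A[OF y])
    also have "\<dots> = (\<Sum>i<n. if i = nx n j then k (A ! nx n j) else 0)"
    proof (rule sum.cong[OF refl])
      fix i assume "i \<in> {..<n}" then have i: "i < n" by simp
      have "orbit q (A ! i) = orbit q y \<longleftrightarrow> i = nx n j"
        using A_tail_inj[OF i nx_lt[OF j]] unfolding y_def by blast
      then show "(if orbit q (A ! i) = orbit q y then k (A ! i) else 0) = (if i = nx n j then k (A ! nx n j) else 0)"
        by simp
    qed
    also have "\<dots> = k (A ! nx n j)" using nx_lt[OF j] by (simp add: sum.delta)
    also have "(\<Sum>x\<in>orbit q y. if al x \<in> set A then k x else 0) = (\<Sum>i<n. if orbit q (A ! nx n i) = orbit q y then k (al (A ! i)) else 0)"
      by (rule ind_alA[OF y])
    also have "\<dots> = (\<Sum>i<n. if i = j then k (al (A ! j)) else 0)"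
    proof (rule sum.cong[OF refl])
      fix i assume "i \<in> {..<n}" then have i: "i < n" by simp
      have "orbit q (A ! nx n i) = orbit q y \<longleftrightarrow> i = j"
        using A_tail_inj[OF nx_lt[OF i] nx_lt[OF j]] nx_inj[OF i j] unfolding y_def by blast
      then show "(if orbit q (A ! nx n i) = orbit q y then k (al (A ! i)) else 0) = (if i = j then k (al (A ! j)) else 0)"
        by simp
    qed
    also have "\<dots> = k (al (A ! j))" using j by (simp add: sum.delta)
    also have "\<dots> = - k (A ! j)" using odd A_nth_D[OF j] by simp
    finally show ?thesis by simp
  qed
  have all: "k (A ! j) = k (A ! 0)" if "j < n" for j
    using that
  proof (induction j)
    case 0 then show ?case by simp
  next
    case (Suc j)
    then have "nx n j = Suc j" by (simp add: nx_def)
    then show ?case using step[of j] Suc by simp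
  qed
  show ?thesis
  proof
    fix x assume x: "x \<in> D"
    show "k x = k (A ! 0) * eta x"
    proof (cases "x \<in> set A")
      case True
      then obtain j where j: "j < n" "x = A ! j" by (auto simp: in_set_conv_nth)
      have "eta x = 1" using True A_excl unfolding eta_def by simp
      then show ?thesis using all j by simp
    next
      case False
      show ?thesis
      proof (cases "al x \<in> set A")
        case True
        then obtain j where j: "j < n" "al x = A ! j" by (auto simp: in_set_conv_nth)
        have "eta x = -1" using True False unfolding eta_def by simp
        moreover have "k x = - k (al x)" using odd x by simp
        ultimately show ?thesis using all j by simp
      next
        case False2: False
        then have "\<not> cr x" using False unfolding cr_def by simp
        then show ?thesis using supp x eta_zero by simp
      qed
    qed
  qed
qed

abbreviation "m \<equiv> length B"

lemma B_one: "\<exists>j0<m. cr (B ! j0) \<and> (\<forall>j<m. j \<noteq> j0 \<longrightarrow> \<not> cr (B ! j))"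
proof -
  define I where "I = {i. i < n \<and> (\<exists>y\<in>set B. y = A ! i \<or> y = al (A ! i))}"
  obtain i0 where I: "I = {i0}" using cross unfolding I_def[symmetric] by (auto simp: card_Suc_eq)
  have i0: "i0 < n" "\<exists>y\<in>set B. y = A ! i0 \<or> y = al (A ! i0)" using I unfolding I_def by auto
  then obtain j0 where j0: "j0 < m" "B ! j0 = A ! i0 \<or> B ! j0 = al (A ! i0)"
    by (auto simp: in_set_conv_nth)
  have BD: "j < m \<Longrightarrow> B ! j \<in> D" for j using B_loop unfolding gloop_def by auto
  have onlyi0: "B ! j = A ! i0 \<or> B ! j = al (A ! i0)" if j: "j < m" "cr (B ! j)" for j
  proof -
    obtain i where i: "i < n" "B ! j = A ! i \<or> al (B ! j) = A ! i"
      using j(2) unfolding cr_def by (auto simp: in_set_conv_nth)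
    then have "B ! j = A ! i \<or> B ! j = al (A ! i)" using al_al BD[OF j(1)] by metis
    then have "i \<in> I" unfolding I_def using i(1) j(1) nth_mem by blast
    then have "i = i0" using I by simp
    then show ?thesis using \<open>B ! j = A ! i \<or> B ! j = al (A ! i)\<close> by simp
  qed
  have "cr (B ! j0)" using j0(2) i0(1) unfolding cr_def
    by (metis al_al A_nth_D nth_mem)
  moreover have "\<not> cr (B ! j)" if j: "j < m" "j \<noteq> j0" for j
  proof
    assume c: "cr (B ! j)"
    have d: "B ! j \<noteq> B ! j0" "B ! j \<noteq> al (B ! j0)" using B_dist j j0(1) by blast+
    have a0: "al (al (A ! i0)) = A ! i0" using al_al A_nth_D[OF i0(1)] .
    show False using onlyi0[OF j(1) c] j0(2) d a0 by metis
  qed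
  ultimately show ?thesis using j0(1) by blast
qed

lemma sum_B_one:
  fixes f :: "_ \<Rightarrow> real"
  assumes j0: "j0 < m" and z: "\<forall>j<m. j \<noteq> j0 \<longrightarrow> f (B ! j) = 0"
  shows "(\<Sum>x\<leftarrow>B. f x) = f (B ! j0)"
proof -
  have "(\<Sum>x\<leftarrow>B. f x) = (\<Sum>j<m. f (B ! j))" by (rule sum_list_nth)
  also have "\<dots> = (\<Sum>j<m. if j = j0 then f (B ! j0) else 0)"
    by (rule sum.cong[OF refl]) (use z in auto)
  also have "\<dots> = f (B ! j0)" using j0 by (simp add: sum.delta)
  finally show ?thesis .
qed

lemma B_tele: "(\<Sum>x\<leftarrow>B. h (orbit p (al x)) - h (orbit p x)) = (0::real)"
proof -
  have "walk (orbit p (hd B)) B (orbit p (hd B))" using B_loop gloop_walk by blast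
  from walk_tele[OF this] show ?thesis by simp
qed

lemma loop_tele: "gloop xs \<Longrightarrow> (\<Sum>x\<leftarrow>xs. h (orbit p (al x)) - h (orbit p x)) = (0::real)"
proof -
  assume "gloop xs"
  then have "walk (orbit p (hd xs)) xs (orbit p (hd xs))" using gloop_walk by blast
  from walk_tele[OF this] show ?thesis by simp
qed

theorem uniqueness:
  fixes c :: "_ \<Rightarrow> real"
  assumes odd: "\<forall>x\<in>D. c (al x) = - c x"
    and closed: "\<forall>y\<in>D. (\<Sum>x\<in>orbit q y. c x) = 0"
    and cocl: "\<forall>y\<in>D. (\<Sum>x\<in>orbit p y. w x * c x) = 0"
    and per: "\<forall>xs. gloop xs \<and> (\<forall>x\<in>set xs. \<not> cr x) \<longrightarrow> (\<Sum>x\<leftarrow>xs. c x) = 0"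
    and perB: "(\<Sum>x\<leftarrow>B. c x) = 0"
  shows "\<forall>x\<in>D. c x = 0"
proof -
  have okal: "\<forall>x\<in>D. (\<not> cr (al x)) = (\<not> cr x)" using cr_al by simp
  obtain h where h: "\<forall>x\<in>D. \<not> cr x \<longrightarrow> c x = h (orbit p (al x)) - h (orbit p x)"
    using potential[OF odd okal] per by blast
  define k where "k x = c x - (h (orbit p (al x)) - h (orbit p x))" for x
  have kodd: "\<forall>x\<in>D. k (al x) = - k x" unfolding k_def using odd al_al by simp
  have ksupp: "\<forall>x\<in>D. \<not> cr x \<longrightarrow> k x = 0" unfolding k_def using h by simp
  have kclosed: "\<forall>y\<in>D. (\<Sum>x\<in>orbit q y. k x) = 0"
  proof
    fix y assume y: "y \<in> D"
    have "(\<Sum>x\<in>orbit q y. k x) = (\<Sum>x\<in>orbit q y. c x) - (\<Sum>x\<in>orbit q y. h (orbit p (al x)) - h (orbit p x))"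
      unfolding k_def by (rule sum_subtractf)
    then show "(\<Sum>x\<in>orbit q y. k x) = 0" using closed y dh_closed[OF y, of h] by simp
  qed
  define t where "t = k (A ! 0)"
  have kt: "\<forall>x\<in>D. k x = t * eta x" using propagate[OF kodd ksupp kclosed] unfolding t_def .
  obtain j0 where j0: "j0 < m" "cr (B ! j0)" "\<forall>j<m. j \<noteq> j0 \<longrightarrow> \<not> cr (B ! j)" using B_one by blast
  have BD: "j < m \<Longrightarrow> B ! j \<in> D" for j using B_loop unfolding gloop_def by auto
  have "(\<Sum>x\<leftarrow>B. c x) = (\<Sum>x\<leftarrow>B. (h (orbit p (al x)) - h (orbit p x)) + k x)"
    unfolding k_def by simp
  also have "\<dots> = (\<Sum>x\<leftarrow>B. h (orbit p (al x)) - h (orbit p x)) + (\<Sum>x\<leftarrow>B. k x)"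
    by (rule sum_list_addf)
  also have "(\<Sum>x\<leftarrow>B. k x) = k (B ! j0)"
    using sum_B_one[OF j0(1)] j0(3) ksupp BD by blast
  finally have "t * eta (B ! j0) = 0" using perB B_tele kt BD[OF j0(1)] by simp
  then have t0: "t = 0" using eta_nz[OF j0(2)] by simp
  have "\<forall>x\<in>D. c x = h (orbit p (al x)) - h (orbit p x)"
  proof
    fix x assume "x \<in> D"
    then have "k x = 0" using kt t0 by simp
    then show "c x = h (orbit p (al x)) - h (orbit p x)" unfolding k_def by simp
  qed
  then show ?thesis using energy[OF odd cocl] by blast
qed

theorem existence:
  "\<exists>c :: _ \<Rightarrow> real. (\<forall>x\<in>D. c (al x) = - c x) \<and>
    (\<forall>y\<in>D. (\<Sum>x\<in>orbit q y. c x) = 0) \<and>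
    (\<forall>y\<in>D. (\<Sum>x\<in>orbit p y. w x * c x) = 0) \<and>
    (\<forall>xs. gloop xs \<and> (\<forall>x\<in>set xs. \<not> cr x) \<longrightarrow> (\<Sum>x\<leftarrow>xs. c x) = 0) \<and>
    (\<Sum>x\<leftarrow>B. c x) = 1"
proof -
  define g where "g v = - (\<Sum>x\<in>v. w x * eta x)" for v
  have g0: "(\<Sum>v\<in>V. g v) = 0"
  proof -
    have "(\<Sum>v\<in>V. g v) = - (\<Sum>v\<in>V. \<Sum>x\<in>v. w x * eta x)" unfolding g_def by (simp add: sum_negf)
    also have "(\<Sum>v\<in>V. \<Sum>x\<in>v. w x * eta x) = (\<Sum>x\<in>D. w x * eta x)"
      using sum_by_orbit[of "\<lambda>v x. w x * eta x"] by simp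
    also have "(\<Sum>x\<in>D. w x * eta x) = 0"
    proof -
      have "(\<Sum>x\<in>D. w x * eta x) = (\<Sum>x\<in>D. w (al x) * eta (al x))" by (rule sum_al[symmetric])
      also have "\<dots> = (\<Sum>x\<in>D. - (w x * eta x))"
        by (rule sum.cong[OF refl]) (simp add: w_al eta_odd)
      finally show ?thesis by (simp add: sum_negf)
    qed
    finally show ?thesis by simp
  qed
  obtain h where h: "\<forall>v\<in>V. (\<Sum>x\<in>v. w x * (h (orbit p (al x)) - h v)) = g v"
    using laplace[OF g0] by blast
  define c0 where "c0 x = eta x + (h (orbit p (al x)) - h (orbit p x))" for x
  have c0odd: "\<forall>x\<in>D. c0 (al x) = - c0 x" unfolding c0_def using eta_odd al_al by simp
  have c0closed: "\<forall>y\<in>D. (\<Sum>x\<in>orbit q y. c0 x) = 0"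
  proof
    fix y assume y: "y \<in> D"
    have "(\<Sum>x\<in>orbit q y. c0 x) = (\<Sum>x\<in>orbit q y. eta x) + (\<Sum>x\<in>orbit q y. h (orbit p (al x)) - h (orbit p x))"
      unfolding c0_def by (rule sum.distrib)
    then show "(\<Sum>x\<in>orbit q y. c0 x) = 0" using eta_closed[OF y] dh_closed[OF y, of h] by simp
  qed
  have c0cocl: "\<forall>y\<in>D. (\<Sum>x\<in>orbit p y. w x * c0 x) = 0"
  proof
    fix y assume y: "y \<in> D"
    have vV: "orbit p y \<in> V" using y by (simp add: V_def)
    have "(\<Sum>x\<in>orbit p y. w x * c0 x) = (\<Sum>x\<in>orbit p y. w x * eta x + w x * (h (orbit p (al x)) - h (orbit p y)))"
    proof (rule sum.cong[OF refl])
      fix x assume "x \<in> orbit p y"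
      then have "orbit p x = orbit p y" using porb_eq y by blast
      then show "w x * c0 x = w x * eta x + w x * (h (orbit p (al x)) - h (orbit p y))"
        unfolding c0_def by (simp add: distrib_left)
    qed
    also have "\<dots> = (\<Sum>x\<in>orbit p y. w x * eta x) + (\<Sum>x\<in>orbit p y. w x * (h (orbit p (al x)) - h (orbit p y)))"
      by (rule sum.distrib)
    also have "\<dots> = 0" using h vV unfolding g_def by simp
    finally show "(\<Sum>x\<in>orbit p y. w x * c0 x) = 0" .
  qed
  have c0per: "\<forall>xs. gloop xs \<and> (\<forall>x\<in>set xs. \<not> cr x) \<longrightarrow> (\<Sum>x\<leftarrow>xs. c0 x) = 0"
  proof (intro allI impI)
    fix xs assume a: "gloop xs \<and> (\<forall>x\<in>set xs. \<not> cr x)"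
    have "(\<Sum>x\<leftarrow>xs. c0 x) = (\<Sum>x\<leftarrow>xs. eta x) + (\<Sum>x\<leftarrow>xs. h (orbit p (al x)) - h (orbit p x))"
      unfolding c0_def by (rule sum_list_addf)
    also have "(\<Sum>x\<leftarrow>xs. eta x) = (\<Sum>x\<leftarrow>xs. 0)"
      by (rule arg_cong[of _ _ sum_list], rule map_cong[OF refl]) (use a eta_zero in blast)
    finally show "(\<Sum>x\<leftarrow>xs. c0 x) = 0" using loop_tele a by simp
  qed
  obtain j0 where j0: "j0 < m" "cr (B ! j0)" "\<forall>j<m. j \<noteq> j0 \<longrightarrow> \<not> cr (B ! j)" using B_one by blast
  define e0 where "e0 = eta (B ! j0)"
  have e0: "e0 \<noteq> 0" unfolding e0_def using eta_nz[OF j0(2)] .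
  have c0B: "(\<Sum>x\<leftarrow>B. c0 x) = e0"
  proof -
    have "(\<Sum>x\<leftarrow>B. c0 x) = (\<Sum>x\<leftarrow>B. eta x) + (\<Sum>x\<leftarrow>B. h (orbit p (al x)) - h (orbit p x))"
      unfolding c0_def by (rule sum_list_addf)
    also have "(\<Sum>x\<leftarrow>B. eta x) = eta (B ! j0)"
      using sum_B_one[OF j0(1)] j0(3) eta_zero by blast
    finally show ?thesis using B_tele unfolding e0_def by simp
  qed
  define c where "c x = c0 x / e0" for x
  show ?thesis
  proof (intro exI[of _ c] conjI)
    show "\<forall>x\<in>D. c (al x) = - c x" using c0odd unfolding c_def by simp
    show "\<forall>y\<in>D. (\<Sum>x\<in>orbit q y. c x) = 0"
      using c0closed unfolding c_def by (simp add: sum_divide_distrib[symmetric])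
    show "\<forall>y\<in>D. (\<Sum>x\<in>orbit p y. w x * c x) = 0"
    proof
      fix y assume "y \<in> D"
      have "(\<Sum>x\<in>orbit p y. w x * c x) = (\<Sum>x\<in>orbit p y. w x * c0 x) / e0"
        unfolding c_def sum_divide_distrib by simp
      then show "(\<Sum>x\<in>orbit p y. w x * c x) = 0" using c0cocl \<open>y \<in> D\<close> by simp
    qed
    show "\<forall>xs. gloop xs \<and> (\<forall>x\<in>set xs. \<not> cr x) \<longrightarrow> (\<Sum>x\<leftarrow>xs. c x) = 0"
    proof (intro allI impI)
      fix xs assume a: "gloop xs \<and> (\<forall>x\<in>set xs. \<not> cr x)"
      have "(\<Sum>x\<leftarrow>xs. c x) = (\<Sum>x\<leftarrow>xs. c0 x) / e0" unfolding c_def by (simp add: sum_list_divide)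
      then show "(\<Sum>x\<leftarrow>xs. c x) = 0" using c0per a by simp
    qed
    have "(\<Sum>x\<leftarrow>B. c x) = (\<Sum>x\<leftarrow>B. c0 x) / e0" unfolding c_def by (simp add: sum_list_divide)
    then show "(\<Sum>x\<leftarrow>B. c x) = 1" using c0B e0 by simp
  qed
qed

end


lemma ltail_P[simp]: "ltail al sg (Prim x) = (True, orbit sg x)" by simp
lemma lhead_P[simp]: "lhead al sg (Prim x) = (True, orbit sg (al x))" by (simp add: lhead_def)
lemma ltail_D[simp]: "ltail al sg (Dua x) = (False, orbit (sg \<circ> al) x)" by simp
lemma lhead_D[simp]: "lhead al sg (Dua x) = (False, orbit (sg \<circ> al) (al x))" by (simp add: lhead_def)

lemma Prim_ledges[simp]: "Prim x \<in> ledges D \<longleftrightarrow> x \<in> D" by (auto simp: ledges_def)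
lemma Dua_ledges[simp]: "Dua x \<in> ledges D \<longleftrightarrow> x \<in> D" by (auto simp: ledges_def)

lemma is_loop_Prim:
  "is_loop D al sg (map Prim xs) \<longleftrightarrow> xs \<noteq> [] \<and> set xs \<subseteq> D \<and>
     (\<forall>i. Suc i < length xs \<longrightarrow> orbit sg (al (xs ! i)) = orbit sg (xs ! Suc i)) \<and>
     orbit sg (al (last xs)) = orbit sg (hd xs)"
proof -
  have s: "set (map Prim xs) \<subseteq> ledges D \<longleftrightarrow> set xs \<subseteq> D" by auto
  show ?thesis
  proof (cases "xs = []")
    case True then show ?thesis by (simp add: is_loop_def)
  next
    case False
    then show ?thesis unfolding is_loop_def s by (simp add: last_map hd_map)
  qed
qed

lemma is_loop_Dua:
  "is_loop D al sg (map Dua xs) \<longleftrightarrow> xs \<noteq> [] \<and> set xs \<subseteq> D \<and>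
     (\<forall>i. Suc i < length xs \<longrightarrow> orbit (sg \<circ> al) (al (xs ! i)) = orbit (sg \<circ> al) (xs ! Suc i)) \<and>
     orbit (sg \<circ> al) (al (last xs)) = orbit (sg \<circ> al) (hd xs)"
proof -
  have s: "set (map Dua xs) \<subseteq> ledges D \<longleftrightarrow> set xs \<subseteq> D" by auto
  show ?thesis
  proof (cases "xs = []")
    case True then show ?thesis by (simp add: is_loop_def)
  next
    case False
    then show ?thesis unfolding is_loop_def s by (simp add: last_map hd_map)
  qed
qed

fun isP :: "'d ledge \<Rightarrow> bool" where "isP (Prim _) = True" | "isP (Dua _) = False"
fun unl :: "'d ledge \<Rightarrow> 'd" where "unl (Prim x) = x" | "unl (Dua x) = x"

lemma fst_ltail: "fst (ltail al sg e) = isP e" by (cases e) auto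
lemma fst_lhead: "fst (lhead al sg e) = isP e" by (cases e) auto

lemma loop_kinds:
  assumes "is_loop D al sg \<gamma>"
  shows "\<gamma> = map Prim (map unl \<gamma>) \<or> \<gamma> = map Dua (map unl \<gamma>)"
proof -
  have ch: "\<forall>i. Suc i < length \<gamma> \<longrightarrow> isP (\<gamma> ! i) = isP (\<gamma> ! Suc i)"
    using assms unfolding is_loop_def by (metis fst_lhead fst_ltail)
  have all: "i < length \<gamma> \<Longrightarrow> isP (\<gamma> ! i) = isP (\<gamma> ! 0)" for i
  proof (induction i)
    case 0 then show ?case by simp
  next
    case (Suc i) then show ?case using ch by simp
  qed
  show ?thesis
  proof (cases "isP (\<gamma> ! 0)")
    case True
    have "\<gamma> ! i = Prim (unl (\<gamma> ! i))" if "i < length \<gamma>" for i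
      using all[OF that] True by (cases "\<gamma> ! i") auto
    then have "\<gamma> = map Prim (map unl \<gamma>)" by (intro nth_equalityI) auto
    then show ?thesis by blast
  next
    case False
    have "\<gamma> ! i = Dua (unl (\<gamma> ! i))" if "i < length \<gamma>" for i
      using all[OF that] False by (cases "\<gamma> ! i") auto
    then have "\<gamma> = map Dua (map unl \<gamma>)" by (intro nth_equalityI) auto
    then show ?thesis by blast
  qed
qed

lemma Re_sum_list: "Re (\<Sum>x\<leftarrow>xs. f x) = (\<Sum>x\<leftarrow>xs. Re (f x))"
  by (induction xs) auto

lemma Im_sum_list: "Im (\<Sum>x\<leftarrow>xs. f x) = (\<Sum>x\<leftarrow>xs. Im (f x))"
  by (induction xs) auto

lemma loop_integral_map: "loop_integral \<Phi> (map f xs) = (\<Sum>x\<leftarrow>xs. \<Phi> (f x))"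
  by (simp add: loop_integral_def comp_def)

lemma comb_gm1:
  assumes cm: "comb_map D al sg" and cs: "conformal_structure D al \<rho>"
  shows "gm D al sg (sg \<circ> al) (\<lambda>x. \<rho> (Prim x))"
proof -
  have al: "\<And>x. x \<in> D \<Longrightarrow> al x \<in> D" using cm unfolding comb_map_def bij_betw_def by blast
  show ?thesis
  proof
    show "finite D" "D \<noteq> {}" "bij_betw sg D D" using cm unfolding comb_map_def by auto
    show "\<And>x. x \<in> D \<Longrightarrow> al x \<in> D" by (rule al)
    show "\<And>x. x \<in> D \<Longrightarrow> al (al x) = x" "\<And>x. x \<in> D \<Longrightarrow> al x \<noteq> x" using cm unfolding comb_map_def by auto
    show "\<And>x. x \<in> D \<Longrightarrow> (sg \<circ> al) x = sg (al x)" by simp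
    show "\<And>x y. x \<in> D \<Longrightarrow> y \<in> D \<Longrightarrow> (x, y) \<in> ({(u, al u) |u. u \<in> D} \<union> {(u, sg u) |u. u \<in> D})\<^sup>*"
      using cm unfolding comb_map_def by blast
    show "\<And>x. x \<in> D \<Longrightarrow> 0 < \<rho> (Prim x)" using cs unfolding conformal_structure_def by simp
    show "\<And>x. x \<in> D \<Longrightarrow> \<rho> (Prim (al x)) = \<rho> (Prim x)"
      using cs unfolding conformal_structure_def by (metis Prim_ledges lrev.simps(1))
  qed
qed

lemma comb_gm2:
  assumes cm: "comb_map D al sg" and cs: "conformal_structure D al \<rho>"
  shows "gm D al (sg \<circ> al) sg (\<lambda>x. \<rho> (Dua x))"
proof -
  have al: "\<And>x. x \<in> D \<Longrightarrow> al x \<in> D" using cm unfolding comb_map_def bij_betw_def by blast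
  have alal: "\<And>x. x \<in> D \<Longrightarrow> al (al x) = x" using cm unfolding comb_map_def by auto
  have sgb: "bij_betw sg D D" and alb: "bij_betw al D D" using cm unfolding comb_map_def by auto
  show ?thesis
  proof
    show "finite D" "D \<noteq> {}" using cm unfolding comb_map_def by auto
    show "bij_betw (sg \<circ> al) D D" using bij_betw_trans[OF alb sgb] .
    show "\<And>x. x \<in> D \<Longrightarrow> al x \<in> D" by (rule al)
    show "\<And>x. x \<in> D \<Longrightarrow> al (al x) = x" "\<And>x. x \<in> D \<Longrightarrow> al x \<noteq> x" using cm unfolding comb_map_def by auto
    show "\<And>x. x \<in> D \<Longrightarrow> sg x = (sg \<circ> al) (al x)" using alal by simp
    show "\<And>x. x \<in> D \<Longrightarrow> 0 < \<rho> (Dua x)" using cs unfolding conformal_structure_def by simp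
    show "\<And>x. x \<in> D \<Longrightarrow> \<rho> (Dua (al x)) = \<rho> (Dua x)"
      using cs unfolding conformal_structure_def by (metis Dua_ledges lrev.simps(2))
    fix x y assume x: "x \<in> D" and y: "y \<in> D"
    let ?E = "{(u, al u) |u. u \<in> D} \<union> {(u, sg u) |u. u \<in> D}"
    let ?F = "{(u, al u) |u. u \<in> D} \<union> {(u, (sg \<circ> al) u) |u. u \<in> D}"
    have sub: "?E \<subseteq> ?F\<^sup>*"
    proof
      fix z assume "z \<in> ?E"
      then consider u where "u \<in> D" "z = (u, al u)" | u where "u \<in> D" "z = (u, sg u)" by blast
      then show "z \<in> ?F\<^sup>*"
      proof cases
        case 1 then show ?thesis by blast
      next
        case 2
        have a: "(u, al u) \<in> ?F" using 2 by blast
        have b: "(al u, (sg \<circ> al) (al u)) \<in> ?F" using 2 al by blast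
        have "(sg \<circ> al) (al u) = sg u" using 2 alal by simp
        moreover have "(u, (sg \<circ> al) (al u)) \<in> ?F\<^sup>*" by (rule rtrancl_into_rtrancl[OF r_into_rtrancl[OF a] b])
        ultimately show ?thesis using 2(2) by simp
      qed
    qed
    have "(x, y) \<in> ?E\<^sup>*" using cm x y unfolding comb_map_def by blast
    then show "(x, y) \<in> ?F\<^sup>*" by (rule subsetD[OF rtrancl_subset_rtrancl[OF sub]])
  qed
qed


lemma holo_facts:
  assumes H: "holomorphic_form D al sg \<rho> \<Psi>" and cs: "conformal_structure D al \<rho>"
    and x: "x \<in> D" and alx: "al x \<in> D"
  shows "\<Psi> (Prim (al x)) = - \<Psi> (Prim x)" "\<Psi> (Dua (al x)) = - \<Psi> (Dua x)"
    "\<Psi> (Dua x) = \<i> * of_real (\<rho> (Prim x)) * \<Psi> (Prim x)"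
    "of_real (\<rho> (Dua x)) * \<Psi> (Dua x) = \<i> * \<Psi> (Prim x)"
proof -
  have of: "one_form D al \<Psi>" and ho: "\<forall>e\<in>ledges D. hodge al \<rho> \<Psi> e = - \<i> * \<Psi> e"
    using H unfolding holomorphic_form_def by auto
  show "\<Psi> (Prim (al x)) = - \<Psi> (Prim x)" using of x unfolding one_form_def by (metis Prim_ledges lrev.simps(1))
  show "\<Psi> (Dua (al x)) = - \<Psi> (Dua x)" using of x unfolding one_form_def by (metis Dua_ledges lrev.simps(2))
  have "hodge al \<rho> \<Psi> (Prim x) = - \<i> * \<Psi> (Prim x)" using ho x by simp
  then have h: "of_real (\<rho> (Dua x)) * \<Psi> (Dua x) = \<i> * \<Psi> (Prim x)"
    unfolding hodge_def by simp
  then show "of_real (\<rho> (Dua x)) * \<Psi> (Dua x) = \<i> * \<Psi> (Prim x)" .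
  have rs: "\<rho> (Prim x) * \<rho> (Dua x) = 1" using cs x unfolding conformal_structure_def by simp
  have "\<Psi> (Dua x) = of_real (\<rho> (Prim x) * \<rho> (Dua x)) * \<Psi> (Dua x)" using rs by simp
  also have "\<dots> = of_real (\<rho> (Prim x)) * (of_real (\<rho> (Dua x)) * \<Psi> (Dua x))" by simp
  also have "\<dots> = \<i> * of_real (\<rho> (Prim x)) * \<Psi> (Prim x)" using h by simp
  finally show "\<Psi> (Dua x) = \<i> * of_real (\<rho> (Prim x)) * \<Psi> (Prim x)" .
qed

lemma holo_diff:
  assumes "holomorphic_form D al sg \<rho> \<Phi>1" "holomorphic_form D al sg \<rho> \<Phi>2"
  shows "holomorphic_form D al sg \<rho> (\<lambda>e. \<Phi>1 e - \<Phi>2 e)"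
  using assms unfolding holomorphic_form_def one_form_def closed_form_def hodge_def
  by (auto simp: sum_subtractf algebra_simps)

lemma LI_diff: "loop_integral (\<lambda>e. \<Phi>1 e - \<Phi>2 e) \<gamma> = loop_integral \<Phi>1 \<gamma> - loop_integral \<Phi>2 \<gamma>"
  unfolding loop_integral_def by (induction \<gamma>) auto

lemma holo_zero:
  assumes H: "holomorphic_form D al sg \<rho> \<Psi>" and z: "\<forall>x\<in>D. \<Psi> (Prim x) = 0 \<and> \<Psi> (Dua x) = 0"
  shows "\<Psi> = (\<lambda>_. 0)"
proof
  fix e
  have of: "one_form D al \<Psi>" using H unfolding holomorphic_form_def by auto
  show "\<Psi> e = 0"
  proof (cases "e \<in> ledges D")
    case True
    then obtain x where "x \<in> D" "e = Prim x \<or> e = Dua x" unfolding ledges_def by auto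
    then show ?thesis using z by auto
  next
    case False then show ?thesis using of unfolding one_form_def by auto
  qed
qed

lemma exists_unique_from:
  assumes "\<exists>x. P x" and "\<And>x y. P x \<Longrightarrow> P y \<Longrightarrow> x = y"
  shows "\<exists>!x. P x"
  using assms by blast


lemma case1:
  assumes cm: "comb_map D al sg" and cs: "conformal_structure D al \<rho>"
    and AA: "A = map Prim A'" and BB: "B = map Dua B'"
    and sA: "simple_loop D al sg A" and sB: "simple_loop D al sg B"
    and crs: "card {i. i < length A \<and> (\<exists>f\<in>set B. dual_edges al (A ! i) f)} = 1"
  shows "\<exists>!\<Phi>. holomorphic_form D al sg \<rho> \<Phi> \<and>
            Re (loop_integral \<Phi> B) = 1 \<and>
            (\<forall>\<gamma>. is_loop D al sg \<gamma> \<and> (\<forall>e\<in>set \<gamma>. \<forall>a\<in>set A. \<not> dual_edges al e a)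
                 \<longrightarrow> Re (loop_integral \<Phi> \<gamma>) = 0)"
proof -
  interpret G1: gm D al sg "sg \<circ> al" "\<lambda>x. \<rho> (Prim x)" by (rule comb_gm1[OF cm cs])
  interpret G2: gm D al "sg \<circ> al" sg "\<lambda>x. \<rho> (Dua x)" by (rule comb_gm2[OF cm cs])
  have alD: "\<And>x. x \<in> D \<Longrightarrow> al x \<in> D" by (rule G1.al_D)
  have alal: "\<And>x. x \<in> D \<Longrightarrow> al (al x) = x" by (rule G1.al_al)
  have lA: "is_loop D al sg (map Prim A')" using sA AA unfolding simple_loop_def by simp
  then have A1: "A' \<noteq> []" "set A' \<subseteq> D"
    "\<forall>i. Suc i < length A' \<longrightarrow> orbit sg (al (A' ! i)) = orbit sg (A' ! Suc i)"
    "orbit sg (al (last A')) = orbit sg (hd A')"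
    unfolding is_loop_Prim by auto
  have A2: "\<forall>i j. i < length A' \<longrightarrow> j < length A' \<longrightarrow> i \<noteq> j \<longrightarrow> A' ! i \<noteq> A' ! j \<and> A' ! i \<noteq> al (A' ! j)"
    using sA AA unfolding simple_loop_def by auto
  have A3: "distinct (map (orbit sg) A')"
    using sA AA unfolding simple_loop_def by (auto simp: distinct_conv_nth)
  have lB: "is_loop D al sg (map Dua B')" using sB BB unfolding simple_loop_def by simp
  then have B1: "G2.gloop B'" unfolding is_loop_Dua G2.gloop_def by simp
  have BD: "set B' \<subseteq> D" using lB unfolding is_loop_Dua by simp
  have B2: "\<forall>i j. i < length B' \<longrightarrow> j < length B' \<longrightarrow> i \<noteq> j \<longrightarrow> B' ! i \<noteq> B' ! j \<and> B' ! i \<noteq> al (B' ! j)"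
    using sB BB unfolding simple_loop_def by auto
  have seteq: "{i. i < length A \<and> (\<exists>f\<in>set B. dual_edges al (A ! i) f)} =
     {i. i < length A' \<and> (\<exists>y\<in>set B'. y = A' ! i \<or> y = al (A' ! i))}"
  proof (rule Collect_cong)
    fix i
    show "(i < length A \<and> (\<exists>f\<in>set B. dual_edges al (A ! i) f)) =
          (i < length A' \<and> (\<exists>y\<in>set B'. y = A' ! i \<or> y = al (A' ! i)))"
    proof (cases "i < length A'")
      case True
      have aD: "A' ! i \<in> D" using True A1(2) by auto
      have "dual_edges al (Prim (A' ! i)) (Dua y) \<longleftrightarrow> (y = A' ! i \<or> y = al (A' ! i))" if "y \<in> D" for y
        unfolding dual_edges_def using that aD alal by auto
      then show ?thesis using True BD AA BB by auto
    next
      case False then show ?thesis using AA by simp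
    qed
  qed
  interpret M: gmAB D al "sg \<circ> al" sg "\<lambda>x. \<rho> (Dua x)" A' B'
  proof
    show "A' \<noteq> []" "set A' \<subseteq> D" by (fact A1(1), fact A1(2))
    show "\<forall>i. Suc i < length A' \<longrightarrow> orbit sg (al (A' ! i)) = orbit sg (A' ! Suc i)" by (fact A1(3))
    show "orbit sg (al (last A')) = orbit sg (hd A')" by (fact A1(4))
    show "\<forall>i j. i < length A' \<longrightarrow> j < length A' \<longrightarrow> i \<noteq> j \<longrightarrow> A' ! i \<noteq> A' ! j \<and> A' ! i \<noteq> al (A' ! j)" by (fact A2)
    show "distinct (map (orbit sg) A')" by (fact A3)
    show "G2.gloop B'" by (fact B1)
    show "\<forall>i j. i < length B' \<longrightarrow> j < length B' \<longrightarrow> i \<noteq> j \<longrightarrow> B' ! i \<noteq> B' ! j \<and> B' ! i \<noteq> al (B' ! j)" by (fact B2)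
    show "card {i. i < length A' \<and> (\<exists>y\<in>set B'. y = A' ! i \<or> y = al (A' ! i))} = 1" using crs seteq by simp
  qed
  have avoid_cr: "(\<forall>x\<in>set xs. \<not> M.cr x) \<longleftrightarrow> (\<forall>e\<in>set (map Dua xs). \<forall>a\<in>set A. \<not> dual_edges al e a)"
    if xsD: "set xs \<subseteq> D" for xs
  proof -
    have "M.cr x \<longleftrightarrow> (\<exists>a\<in>set A. dual_edges al (Dua x) a)" if x: "x \<in> D" for x
    proof
      assume "M.cr x"
      then consider "x \<in> set A'" | "al x \<in> set A'" unfolding M.cr_def by blast
      then show "\<exists>a\<in>set A. dual_edges al (Dua x) a"
      proof cases
        case 1 then show ?thesis using AA unfolding dual_edges_def by (intro bexI[of _ "Prim x"]) auto
      next
        case 2 then show ?thesis using AA unfolding dual_edges_def by (intro bexI[of _ "Prim (al x)"]) auto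
      qed
    next
      assume "\<exists>a\<in>set A. dual_edges al (Dua x) a"
      then obtain a where a: "a \<in> set A'" "dual_edges al (Dua x) (Prim a)" using AA by auto
      have aD: "a \<in> D" using a(1) A1(2) by auto
      from a(2) have "al x = a \<or> al x = al a" unfolding dual_edges_def by auto
      then have "al x = a \<or> x = a" using alal x aD by metis
      then show "M.cr x" using a(1) unfolding M.cr_def by auto
    qed
    then show ?thesis using xsD by auto
  qed
  have prim_avoid: "\<forall>e\<in>set (map Prim xs). \<forall>a\<in>set A. \<not> dual_edges al e a" for xs
    using AA unfolding dual_edges_def by auto
  define P where "P \<Phi> \<longleftrightarrow> holomorphic_form D al sg \<rho> \<Phi> \<and>
            Re (loop_integral \<Phi> B) = 1 \<and>
            (\<forall>\<gamma>. is_loop D al sg \<gamma> \<and> (\<forall>e\<in>set \<gamma>. \<forall>a\<in>set A. \<not> dual_edges al e a)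
                 \<longrightarrow> Re (loop_integral \<Phi> \<gamma>) = 0)" for \<Phi>
  have ex: "\<exists>\<Phi>. P \<Phi>"
  proof -
    obtain c where c: "\<forall>x\<in>D. c (al x) = - c x"
      "\<forall>y\<in>D. (\<Sum>x\<in>orbit sg y. c x) = 0"
      "\<forall>y\<in>D. (\<Sum>x\<in>orbit (sg \<circ> al) y. \<rho> (Dua x) * c x) = 0"
      "\<forall>xs. G2.gloop xs \<and> (\<forall>x\<in>set xs. \<not> M.cr x) \<longrightarrow> (\<Sum>x\<leftarrow>xs. c x) = 0"
      "(\<Sum>x\<leftarrow>B'. c x) = 1"
      using M.existence by blast
    define \<Phi> where "\<Phi> e = (case e of Prim x \<Rightarrow> if x \<in> D then - \<i> * of_real (\<rho> (Dua x) * c x) else 0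
                                  | Dua x \<Rightarrow> if x \<in> D then of_real (c x) else 0)" for e
    have PP: "x \<in> D \<Longrightarrow> \<Phi> (Prim x) = - \<i> * of_real (\<rho> (Dua x) * c x)" for x by (simp add: \<Phi>_def)
    have PD: "x \<in> D \<Longrightarrow> \<Phi> (Dua x) = of_real (c x)" for x by (simp add: \<Phi>_def)
    have of: "one_form D al \<Phi>"
      unfolding one_form_def
    proof (intro conjI ballI allI impI)
      fix e assume "e \<in> ledges D"
      then obtain x where x: "x \<in> D" "e = Prim x \<or> e = Dua x" unfolding ledges_def by auto
      have r: "\<rho> (Dua (al x)) = \<rho> (Dua x)" using G2.w_al x(1) by simp
      show "\<Phi> (lrev al e) = - \<Phi> e"
        using x PP PD alD c(1) r by auto
    next
      fix e assume "e \<notin> ledges D"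
      then show "\<Phi> e = 0" unfolding \<Phi>_def ledges_def by (cases e) auto
    qed
    have cl: "closed_form D al sg \<Phi>"
      unfolding closed_form_def
    proof (intro conjI ballI)
      fix d assume d: "d \<in> D"
      have "(\<Sum>x\<in>orbit (sg \<circ> al) d. \<Phi> (Prim x)) = (\<Sum>x\<in>orbit (sg \<circ> al) d. - \<i> * of_real (\<rho> (Dua x) * c x))"
        using G2.porb_sub[OF d] PP by (intro sum.cong) auto
      also have "\<dots> = - \<i> * of_real (\<Sum>x\<in>orbit (sg \<circ> al) d. \<rho> (Dua x) * c x)"
        by (simp add: sum_distrib_left)
      also have "\<dots> = 0" using c(3) d by simp
      finally show "(\<Sum>x\<in>orbit (sg \<circ> al) d. \<Phi> (Prim x)) = 0" .
      have "(\<Sum>x\<in>orbit sg d. \<Phi> (Dua x)) = (\<Sum>x\<in>orbit sg d. of_real (c x))"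
        using G1.porb_sub[OF d] PD by (intro sum.cong) auto
      also have "\<dots> = of_real (\<Sum>x\<in>orbit sg d. c x)" by simp
      also have "\<dots> = 0" using c(2) d by simp
      finally show "(\<Sum>x\<in>orbit sg d. \<Phi> (Dua x)) = 0" .
    qed
    have hol: "holomorphic_form D al sg \<rho> \<Phi>"
      unfolding holomorphic_form_def
    proof (intro conjI ballI)
      show "one_form D al \<Phi>" by (fact of)
      show "closed_form D al sg \<Phi>" by (fact cl)
      fix e assume "e \<in> ledges D"
      then obtain x where x: "x \<in> D" "e = Prim x \<or> e = Dua x" unfolding ledges_def by auto
      have rs: "\<rho> (Prim x) * \<rho> (Dua x) = 1" using cs x(1) unfolding conformal_structure_def by simp
      have r1: "\<rho> (Prim (al x)) = \<rho> (Prim x)" using G1.w_al x(1) by simp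
      have r2: "\<rho> (Dua (al x)) = \<rho> (Dua x)" using G2.w_al x(1) by simp
      from x(2) show "hodge al \<rho> \<Phi> e = - \<i> * \<Phi> e"
      proof
        assume e: "e = Prim x"
        show ?thesis unfolding e hodge_def using PP[OF x(1)] PD[OF x(1)] by simp
      next
        assume e: "e = Dua x"
        have "hodge al \<rho> \<Phi> e = - of_real (\<rho> (Prim x)) * \<Phi> (Prim (al x))"
          unfolding e hodge_def using r1 by simp
        also have "\<dots> = - of_real (\<rho> (Prim x)) * (\<i> * of_real (\<rho> (Dua x) * c x))"
          using PP[OF alD[OF x(1)]] c(1) x(1) r2 by simp
        also have "\<dots> = - \<i> * of_real (\<rho> (Prim x) * \<rho> (Dua x)) * of_real (c x)" by simp
        also have "\<dots> = - \<i> * \<Phi> e" using rs PD[OF x(1)] e by simp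
        finally show ?thesis .
      qed
    qed
    have LB: "Re (loop_integral \<Phi> B) = 1"
    proof -
      have "loop_integral \<Phi> B = (\<Sum>x\<leftarrow>B'. \<Phi> (Dua x))" unfolding BB loop_integral_map ..
      also have "\<dots> = (\<Sum>x\<leftarrow>B'. of_real (c x))"
        by (rule arg_cong[of _ _ sum_list], rule map_cong[OF refl]) (use BD PD in blast)
      finally show ?thesis using c(5) by (simp add: Re_sum_list)
    qed
    have per: "Re (loop_integral \<Phi> \<gamma>) = 0"
      if g: "is_loop D al sg \<gamma>" "\<forall>e\<in>set \<gamma>. \<forall>a\<in>set A. \<not> dual_edges al e a" for \<gamma>
    proof -
      consider "\<gamma> = map Prim (map unl \<gamma>)" | "\<gamma> = map Dua (map unl \<gamma>)" using loop_kinds[OF g(1)] by blast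
      then show ?thesis
      proof cases
        case 1
        define xs where "xs = map unl \<gamma>"
        have xsD: "set xs \<subseteq> D" using g(1) 1 unfolding xs_def[symmetric] by (metis is_loop_Prim)
        have "loop_integral \<Phi> \<gamma> = (\<Sum>x\<leftarrow>xs. \<Phi> (Prim x))" using 1 unfolding xs_def[symmetric]
          by (metis loop_integral_map)
        also have "\<dots> = (\<Sum>x\<leftarrow>xs. - \<i> * of_real (\<rho> (Dua x) * c x))"
          by (rule arg_cong[of _ _ sum_list], rule map_cong[OF refl]) (use xsD PP in blast)
        finally show ?thesis by (simp add: Re_sum_list)
      next
        case 2
        define xs where "xs = map unl \<gamma>"
        have lp: "is_loop D al sg (map Dua xs)" using g(1) 2 unfolding xs_def[symmetric] by simp
        then have xsD: "set xs \<subseteq> D" unfolding is_loop_Dua by simp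
        have gl: "G2.gloop xs" using lp unfolding is_loop_Dua G2.gloop_def by simp
        have nc: "\<forall>x\<in>set xs. \<not> M.cr x" using avoid_cr[OF xsD] g(2) 2 unfolding xs_def[symmetric] by simp
        have "loop_integral \<Phi> \<gamma> = (\<Sum>x\<leftarrow>xs. \<Phi> (Dua x))" using 2 unfolding xs_def[symmetric]
          by (metis loop_integral_map)
        also have "\<dots> = (\<Sum>x\<leftarrow>xs. of_real (c x))"
          by (rule arg_cong[of _ _ sum_list], rule map_cong[OF refl]) (use xsD PD in blast)
        finally have "Re (loop_integral \<Phi> \<gamma>) = (\<Sum>x\<leftarrow>xs. c x)" by (simp add: Re_sum_list)
        then show ?thesis using c(4) gl nc by simp
      qed
    qed
    show ?thesis using hol LB per unfolding P_def by blast
  qed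
  have un: "\<Phi>1 = \<Phi>2" if P1: "P \<Phi>1" and P2: "P \<Phi>2" for \<Phi>1 \<Phi>2
  proof -
    define \<Psi> where "\<Psi> e = \<Phi>1 e - \<Phi>2 e" for e
    have H: "holomorphic_form D al sg \<rho> \<Psi>" unfolding \<Psi>_def
      using holo_diff P1 P2 unfolding P_def by blast
    have HB: "Re (loop_integral \<Psi> B) = 0" using P1 P2 unfolding P_def \<Psi>_def LI_diff by simp
    have Hper: "Re (loop_integral \<Psi> \<gamma>) = 0"
      if "is_loop D al sg \<gamma>" "\<forall>e\<in>set \<gamma>. \<forall>a\<in>set A. \<not> dual_edges al e a" for \<gamma>
      using P1 P2 that unfolding P_def \<Psi>_def LI_diff by simp
    have hf: "x \<in> D \<Longrightarrow> \<Psi> (Prim (al x)) = - \<Psi> (Prim x) \<and> \<Psi> (Dua (al x)) = - \<Psi> (Dua x) \<and>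
       \<Psi> (Dua x) = \<i> * of_real (\<rho> (Prim x)) * \<Psi> (Prim x) \<and>
       of_real (\<rho> (Dua x)) * \<Psi> (Dua x) = \<i> * \<Psi> (Prim x)" for x
      using holo_facts[OF H cs _ alD] by blast
    have clo: "closed_form D al sg \<Psi>" using H unfolding holomorphic_form_def by blast
    define a where "a x = Re (\<Psi> (Prim x))" for x
    have a0: "\<forall>x\<in>D. a x = 0"
    proof (rule G1.zero_form)
      show "\<forall>x\<in>D. a (al x) = - a x" unfolding a_def using hf by simp
      show "\<forall>y\<in>D. (\<Sum>x\<in>orbit sg y. \<rho> (Prim x) * a x) = 0"
      proof
        fix y assume y: "y \<in> D"
        have "(\<Sum>x\<in>orbit sg y. \<rho> (Prim x) * a x) = (\<Sum>x\<in>orbit sg y. Im (\<Psi> (Dua x)))"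
        proof (rule sum.cong[OF refl])
          fix x assume "x \<in> orbit sg y" then have "x \<in> D" using G1.porb_sub[OF y] by blast
          then show "\<rho> (Prim x) * a x = Im (\<Psi> (Dua x))" using hf unfolding a_def by simp
        qed
        also have "\<dots> = Im (\<Sum>x\<in>orbit sg y. \<Psi> (Dua x))" by (simp add: Im_sum)
        also have "\<dots> = 0" using clo y unfolding closed_form_def by simp
        finally show "(\<Sum>x\<in>orbit sg y. \<rho> (Prim x) * a x) = 0" .
      qed
      show "\<forall>xs. G1.gloop xs \<longrightarrow> (\<Sum>x\<leftarrow>xs. a x) = 0"
      proof (intro allI impI)
        fix xs assume gl: "G1.gloop xs"
        have "is_loop D al sg (map Prim xs)" using gl unfolding is_loop_Prim G1.gloop_def by simp
        then have "Re (loop_integral \<Psi> (map Prim xs)) = 0" using Hper prim_avoid by blast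
        then show "(\<Sum>x\<leftarrow>xs. a x) = 0" unfolding loop_integral_map a_def by (simp add: Re_sum_list)
      qed
    qed
    define b where "b x = Re (\<Psi> (Dua x))" for x
    have b0: "\<forall>x\<in>D. b x = 0"
    proof (rule M.uniqueness)
      show "\<forall>x\<in>D. b (al x) = - b x" unfolding b_def using hf by simp
      show "\<forall>y\<in>D. (\<Sum>x\<in>orbit sg y. b x) = 0"
        using clo unfolding closed_form_def b_def by (simp add: Re_sum[symmetric])
      show "\<forall>y\<in>D. (\<Sum>x\<in>orbit (sg \<circ> al) y. \<rho> (Dua x) * b x) = 0"
      proof
        fix y assume y: "y \<in> D"
        have "(\<Sum>x\<in>orbit (sg \<circ> al) y. \<rho> (Dua x) * b x) = (\<Sum>x\<in>orbit (sg \<circ> al) y. - Im (\<Psi> (Prim x)))"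
        proof (rule sum.cong[OF refl])
          fix x assume "x \<in> orbit (sg \<circ> al) y" then have x: "x \<in> D" using G2.porb_sub[OF y] by blast
          have e: "of_real (\<rho> (Dua x)) * \<Psi> (Dua x) = \<i> * \<Psi> (Prim x)" using hf[OF x] by blast
          have "\<rho> (Dua x) * b x = Re (of_real (\<rho> (Dua x)) * \<Psi> (Dua x))" unfolding b_def by simp
          also have "\<dots> = Re (\<i> * \<Psi> (Prim x))" by (simp only: e)
          finally show "\<rho> (Dua x) * b x = - Im (\<Psi> (Prim x))" by simp
        qed
        also have "\<dots> = - Im (\<Sum>x\<in>orbit (sg \<circ> al) y. \<Psi> (Prim x))" by (simp add: Im_sum sum_negf)
        also have "\<dots> = 0" using clo y unfolding closed_form_def by simp
        finally show "(\<Sum>x\<in>orbit (sg \<circ> al) y. \<rho> (Dua x) * b x) = 0" .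
      qed
      show "\<forall>xs. G2.gloop xs \<and> (\<forall>x\<in>set xs. \<not> M.cr x) \<longrightarrow> (\<Sum>x\<leftarrow>xs. b x) = 0"
      proof (intro allI impI)
        fix xs assume a: "G2.gloop xs \<and> (\<forall>x\<in>set xs. \<not> M.cr x)"
        have lp: "is_loop D al sg (map Dua xs)" using a unfolding is_loop_Dua G2.gloop_def by simp
        then have xsD: "set xs \<subseteq> D" unfolding is_loop_Dua by simp
        have "\<forall>e\<in>set (map Dua xs). \<forall>a\<in>set A. \<not> dual_edges al e a" using avoid_cr[OF xsD] a by blast
        then have "Re (loop_integral \<Psi> (map Dua xs)) = 0" using Hper lp by blast
        then show "(\<Sum>x\<leftarrow>xs. b x) = 0" unfolding loop_integral_map b_def by (simp add: Re_sum_list)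
      qed
      show "(\<Sum>x\<leftarrow>B'. b x) = 0" using HB unfolding BB loop_integral_map b_def by (simp add: Re_sum_list)
    qed
    have "\<forall>x\<in>D. \<Psi> (Prim x) = 0 \<and> \<Psi> (Dua x) = 0"
    proof
      fix x assume x: "x \<in> D"
      have rp: "\<rho> (Prim x) > 0" using G1.w_pos[OF x] by simp
      have "Re (\<Psi> (Dua x)) = - \<rho> (Prim x) * Im (\<Psi> (Prim x))" using hf[OF x] by simp
      then have "Im (\<Psi> (Prim x)) = 0" using b0 x rp unfolding b_def by simp
      then have p0: "\<Psi> (Prim x) = 0" using a0 x unfolding a_def by (simp add: complex_eq_iff)
      have "\<Psi> (Dua x) = \<i> * of_real (\<rho> (Prim x)) * \<Psi> (Prim x)" using hf[OF x] by blast
      then show "\<Psi> (Prim x) = 0 \<and> \<Psi> (Dua x) = 0" using p0 by simp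
    qed
    then have Z: "\<Psi> = (\<lambda>_. 0)" by (rule holo_zero[OF H])
    show "\<Phi>1 = \<Phi>2"
    proof
      fix e
      have "\<Psi> e = 0" using Z by simp
      then show "\<Phi>1 e = \<Phi>2 e" unfolding \<Psi>_def by simp
    qed
  qed
  have "\<exists>!\<Phi>. P \<Phi>" by (rule exists_unique_from[OF ex un])
  then show ?thesis by (simp add: P_def)
qed


lemma case2:
  assumes cm: "comb_map D al sg" and cs: "conformal_structure D al \<rho>"
    and AA: "A = map Dua A'" and BB: "B = map Prim B'"
    and sA: "simple_loop D al sg A" and sB: "simple_loop D al sg B"
    and crs: "card {i. i < length A \<and> (\<exists>f\<in>set B. dual_edges al (A ! i) f)} = 1"
  shows "\<exists>!\<Phi>. holomorphic_form D al sg \<rho> \<Phi> \<and>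
            Re (loop_integral \<Phi> B) = 1 \<and>
            (\<forall>\<gamma>. is_loop D al sg \<gamma> \<and> (\<forall>e\<in>set \<gamma>. \<forall>a\<in>set A. \<not> dual_edges al e a)
                 \<longrightarrow> Re (loop_integral \<Phi> \<gamma>) = 0)"
proof -
  interpret G1: gm D al sg "sg \<circ> al" "\<lambda>x. \<rho> (Prim x)" by (rule comb_gm1[OF cm cs])
  interpret G2: gm D al "sg \<circ> al" sg "\<lambda>x. \<rho> (Dua x)" by (rule comb_gm2[OF cm cs])
  have alD: "\<And>x. x \<in> D \<Longrightarrow> al x \<in> D" by (rule G1.al_D)
  have alal: "\<And>x. x \<in> D \<Longrightarrow> al (al x) = x" by (rule G1.al_al)
  have lA: "is_loop D al sg (map Dua A')" using sA AA unfolding simple_loop_def by simp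
  then have A1: "A' \<noteq> []" "set A' \<subseteq> D"
    "\<forall>i. Suc i < length A' \<longrightarrow> orbit (sg \<circ> al) (al (A' ! i)) = orbit (sg \<circ> al) (A' ! Suc i)"
    "orbit (sg \<circ> al) (al (last A')) = orbit (sg \<circ> al) (hd A')"
    unfolding is_loop_Dua by auto
  have A2: "\<forall>i j. i < length A' \<longrightarrow> j < length A' \<longrightarrow> i \<noteq> j \<longrightarrow> A' ! i \<noteq> A' ! j \<and> A' ! i \<noteq> al (A' ! j)"
    using sA AA unfolding simple_loop_def by auto
  have A3: "distinct (map (orbit (sg \<circ> al)) A')"
    using sA AA unfolding simple_loop_def by (auto simp: distinct_conv_nth)
  have lB: "is_loop D al sg (map Prim B')" using sB BB unfolding simple_loop_def by simp
  then have B1: "G1.gloop B'" unfolding is_loop_Prim G1.gloop_def by simp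
  have BD: "set B' \<subseteq> D" using lB unfolding is_loop_Prim by simp
  have B2: "\<forall>i j. i < length B' \<longrightarrow> j < length B' \<longrightarrow> i \<noteq> j \<longrightarrow> B' ! i \<noteq> B' ! j \<and> B' ! i \<noteq> al (B' ! j)"
    using sB BB unfolding simple_loop_def by auto
  have seteq: "{i. i < length A \<and> (\<exists>f\<in>set B. dual_edges al (A ! i) f)} =
     {i. i < length A' \<and> (\<exists>y\<in>set B'. y = A' ! i \<or> y = al (A' ! i))}"
  proof (rule Collect_cong)
    fix i
    show "(i < length A \<and> (\<exists>f\<in>set B. dual_edges al (A ! i) f)) =
          (i < length A' \<and> (\<exists>y\<in>set B'. y = A' ! i \<or> y = al (A' ! i)))"
    proof (cases "i < length A'")
      case True
      have aD: "A' ! i \<in> D" using True A1(2) by auto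
      have "dual_edges al (Dua (A' ! i)) (Prim y) \<longleftrightarrow> (y = A' ! i \<or> y = al (A' ! i))" if y: "y \<in> D" for y
      proof -
        have "dual_edges al (Dua (A' ! i)) (Prim y) \<longleftrightarrow> (al (A' ! i) = y \<or> al (A' ! i) = al y)"
          unfolding dual_edges_def by auto
        also have "\<dots> \<longleftrightarrow> (y = A' ! i \<or> y = al (A' ! i))" using y aD alal by metis
        finally show ?thesis .
      qed
      then show ?thesis using True BD AA BB by auto
    next
      case False then show ?thesis using AA by simp
    qed
  qed
  interpret M: gmAB D al sg "sg \<circ> al" "\<lambda>x. \<rho> (Prim x)" A' B'
  proof
    show "A' \<noteq> []" "set A' \<subseteq> D" by (fact A1(1), fact A1(2))
    show "\<forall>i. Suc i < length A' \<longrightarrow> orbit (sg \<circ> al) (al (A' ! i)) = orbit (sg \<circ> al) (A' ! Suc i)" by (fact A1(3))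
    show "orbit (sg \<circ> al) (al (last A')) = orbit (sg \<circ> al) (hd A')" by (fact A1(4))
    show "\<forall>i j. i < length A' \<longrightarrow> j < length A' \<longrightarrow> i \<noteq> j \<longrightarrow> A' ! i \<noteq> A' ! j \<and> A' ! i \<noteq> al (A' ! j)" by (fact A2)
    show "distinct (map (orbit (sg \<circ> al)) A')" by (fact A3)
    show "G1.gloop B'" by (fact B1)
    show "\<forall>i j. i < length B' \<longrightarrow> j < length B' \<longrightarrow> i \<noteq> j \<longrightarrow> B' ! i \<noteq> B' ! j \<and> B' ! i \<noteq> al (B' ! j)" by (fact B2)
    show "card {i. i < length A' \<and> (\<exists>y\<in>set B'. y = A' ! i \<or> y = al (A' ! i))} = 1" using crs seteq by simp
  qed
  have avoid_cr: "(\<forall>x\<in>set xs. \<not> M.cr x) \<longleftrightarrow> (\<forall>e\<in>set (map Prim xs). \<forall>a\<in>set A. \<not> dual_edges al e a)"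
    if xsD: "set xs \<subseteq> D" for xs
  proof -
    have "M.cr x \<longleftrightarrow> (\<exists>a\<in>set A. dual_edges al (Prim x) a)" if x: "x \<in> D" for x
    proof
      assume "M.cr x"
      then consider "x \<in> set A'" | "al x \<in> set A'" unfolding M.cr_def by blast
      then show "\<exists>a\<in>set A. dual_edges al (Prim x) a"
      proof cases
        case 1 then show ?thesis using AA unfolding dual_edges_def by (intro bexI[of _ "Dua x"]) auto
      next
        case 2 then show ?thesis using AA x alal unfolding dual_edges_def by (intro bexI[of _ "Dua (al x)"]) auto
      qed
    next
      assume "\<exists>a\<in>set A. dual_edges al (Prim x) a"
      then obtain a where a: "a \<in> set A'" "dual_edges al (Prim x) (Dua a)" using AA by auto
      have aD: "a \<in> D" using a(1) A1(2) by auto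
      from a(2) have "x = a \<or> x = al a" unfolding dual_edges_def by auto
      then have "x = a \<or> al x = a" using alal x aD by metis
      then show "M.cr x" using a(1) unfolding M.cr_def by auto
    qed
    then show ?thesis using xsD by auto
  qed
  have dua_avoid: "\<forall>e\<in>set (map Dua xs). \<forall>a\<in>set A. \<not> dual_edges al e a" for xs
    using AA unfolding dual_edges_def by auto
  define P where "P \<Phi> \<longleftrightarrow> holomorphic_form D al sg \<rho> \<Phi> \<and>
            Re (loop_integral \<Phi> B) = 1 \<and>
            (\<forall>\<gamma>. is_loop D al sg \<gamma> \<and> (\<forall>e\<in>set \<gamma>. \<forall>a\<in>set A. \<not> dual_edges al e a)
                 \<longrightarrow> Re (loop_integral \<Phi> \<gamma>) = 0)" for \<Phi>
  have ex: "\<exists>\<Phi>. P \<Phi>"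
  proof -
    obtain c where c: "\<forall>x\<in>D. c (al x) = - c x"
      "\<forall>y\<in>D. (\<Sum>x\<in>orbit (sg \<circ> al) y. c x) = 0"
      "\<forall>y\<in>D. (\<Sum>x\<in>orbit sg y. \<rho> (Prim x) * c x) = 0"
      "\<forall>xs. G1.gloop xs \<and> (\<forall>x\<in>set xs. \<not> M.cr x) \<longrightarrow> (\<Sum>x\<leftarrow>xs. c x) = 0"
      "(\<Sum>x\<leftarrow>B'. c x) = 1"
      using M.existence by blast
    define \<Phi> where "\<Phi> e = (case e of Prim x \<Rightarrow> if x \<in> D then of_real (c x) else 0
                                  | Dua x \<Rightarrow> if x \<in> D then \<i> * of_real (\<rho> (Prim x) * c x) else 0)" for e
    have PP: "x \<in> D \<Longrightarrow> \<Phi> (Prim x) = of_real (c x)" for x by (simp add: \<Phi>_def)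
    have PD: "x \<in> D \<Longrightarrow> \<Phi> (Dua x) = \<i> * of_real (\<rho> (Prim x) * c x)" for x by (simp add: \<Phi>_def)
    have of: "one_form D al \<Phi>"
      unfolding one_form_def
    proof (intro conjI ballI allI impI)
      fix e assume "e \<in> ledges D"
      then obtain x where x: "x \<in> D" "e = Prim x \<or> e = Dua x" unfolding ledges_def by auto
      have r: "\<rho> (Prim (al x)) = \<rho> (Prim x)" using G1.w_al x(1) by simp
      show "\<Phi> (lrev al e) = - \<Phi> e"
        using x PP PD alD c(1) r by auto
    next
      fix e assume "e \<notin> ledges D"
      then show "\<Phi> e = 0" unfolding \<Phi>_def ledges_def by (cases e) auto
    qed
    have cl: "closed_form D al sg \<Phi>"
      unfolding closed_form_def
    proof (intro conjI ballI)
      fix d assume d: "d \<in> D"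
      have "(\<Sum>x\<in>orbit (sg \<circ> al) d. \<Phi> (Prim x)) = (\<Sum>x\<in>orbit (sg \<circ> al) d. of_real (c x))"
        using G2.porb_sub[OF d] PP by (intro sum.cong) auto
      also have "\<dots> = of_real (\<Sum>x\<in>orbit (sg \<circ> al) d. c x)" by simp
      also have "\<dots> = 0" using c(2) d by simp
      finally show "(\<Sum>x\<in>orbit (sg \<circ> al) d. \<Phi> (Prim x)) = 0" .
      have "(\<Sum>x\<in>orbit sg d. \<Phi> (Dua x)) = (\<Sum>x\<in>orbit sg d. \<i> * of_real (\<rho> (Prim x) * c x))"
        using G1.porb_sub[OF d] PD by (intro sum.cong) auto
      also have "\<dots> = \<i> * of_real (\<Sum>x\<in>orbit sg d. \<rho> (Prim x) * c x)" by (simp add: sum_distrib_left)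
      also have "\<dots> = 0" using c(3) d by simp
      finally show "(\<Sum>x\<in>orbit sg d. \<Phi> (Dua x)) = 0" .
    qed
    have hol: "holomorphic_form D al sg \<rho> \<Phi>"
      unfolding holomorphic_form_def
    proof (intro conjI ballI)
      show "one_form D al \<Phi>" by (fact of)
      show "closed_form D al sg \<Phi>" by (fact cl)
      fix e assume "e \<in> ledges D"
      then obtain x where x: "x \<in> D" "e = Prim x \<or> e = Dua x" unfolding ledges_def by auto
      have rs: "\<rho> (Prim x) * \<rho> (Dua x) = 1" using cs x(1) unfolding conformal_structure_def by simp
      have r1: "\<rho> (Prim (al x)) = \<rho> (Prim x)" using G1.w_al x(1) by simp
      from x(2) show "hodge al \<rho> \<Phi> e = - \<i> * \<Phi> e"
      proof
        assume e: "e = Prim x"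
        have "hodge al \<rho> \<Phi> e = - of_real (\<rho> (Dua x)) * (\<i> * of_real (\<rho> (Prim x) * c x))"
          unfolding e hodge_def using PD[OF x(1)] by simp
        also have "\<dots> = - \<i> * of_real (\<rho> (Prim x) * \<rho> (Dua x)) * of_real (c x)" by simp
        also have "\<dots> = - \<i> * \<Phi> e" using rs PP[OF x(1)] e by simp
        finally show ?thesis .
      next
        assume e: "e = Dua x"
        have "hodge al \<rho> \<Phi> e = - of_real (\<rho> (Prim x)) * \<Phi> (Prim (al x))"
          unfolding e hodge_def using r1 by simp
        also have "\<dots> = of_real (\<rho> (Prim x) * c x)"
          using PP[OF alD[OF x(1)]] c(1) x(1) by simp
        also have "\<dots> = - \<i> * \<Phi> e" using PD[OF x(1)] e by simp
        finally show ?thesis .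
      qed
    qed
    have LB: "Re (loop_integral \<Phi> B) = 1"
    proof -
      have "loop_integral \<Phi> B = (\<Sum>x\<leftarrow>B'. \<Phi> (Prim x))" unfolding BB loop_integral_map ..
      also have "\<dots> = (\<Sum>x\<leftarrow>B'. of_real (c x))"
        by (rule arg_cong[of _ _ sum_list], rule map_cong[OF refl]) (use BD PP in blast)
      finally show ?thesis using c(5) by (simp add: Re_sum_list)
    qed
    have per: "Re (loop_integral \<Phi> \<gamma>) = 0"
      if g: "is_loop D al sg \<gamma>" "\<forall>e\<in>set \<gamma>. \<forall>a\<in>set A. \<not> dual_edges al e a" for \<gamma>
    proof -
      consider "\<gamma> = map Prim (map unl \<gamma>)" | "\<gamma> = map Dua (map unl \<gamma>)" using loop_kinds[OF g(1)] by blast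
      then show ?thesis
      proof cases
        case 2
        define xs where "xs = map unl \<gamma>"
        have xsD: "set xs \<subseteq> D" using g(1) 2 unfolding xs_def[symmetric] by (metis is_loop_Dua)
        have "loop_integral \<Phi> \<gamma> = (\<Sum>x\<leftarrow>xs. \<Phi> (Dua x))" using 2 unfolding xs_def[symmetric]
          by (metis loop_integral_map)
        also have "\<dots> = (\<Sum>x\<leftarrow>xs. \<i> * of_real (\<rho> (Prim x) * c x))"
          by (rule arg_cong[of _ _ sum_list], rule map_cong[OF refl]) (use xsD PD in blast)
        finally show ?thesis by (simp add: Re_sum_list)
      next
        case 1
        define xs where "xs = map unl \<gamma>"
        have lp: "is_loop D al sg (map Prim xs)" using g(1) 1 unfolding xs_def[symmetric] by simp
        then have xsD: "set xs \<subseteq> D" unfolding is_loop_Prim by simp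
        have gl: "G1.gloop xs" using lp unfolding is_loop_Prim G1.gloop_def by simp
        have nc: "\<forall>x\<in>set xs. \<not> M.cr x" using avoid_cr[OF xsD] g(2) 1 unfolding xs_def[symmetric] by simp
        have "loop_integral \<Phi> \<gamma> = (\<Sum>x\<leftarrow>xs. \<Phi> (Prim x))" using 1 unfolding xs_def[symmetric]
          by (metis loop_integral_map)
        also have "\<dots> = (\<Sum>x\<leftarrow>xs. of_real (c x))"
          by (rule arg_cong[of _ _ sum_list], rule map_cong[OF refl]) (use xsD PP in blast)
        finally have "Re (loop_integral \<Phi> \<gamma>) = (\<Sum>x\<leftarrow>xs. c x)" by (simp add: Re_sum_list)
        then show ?thesis using c(4) gl nc by simp
      qed
    qed
    show ?thesis using hol LB per unfolding P_def by blast
  qed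
  have un: "\<Phi>1 = \<Phi>2" if P1: "P \<Phi>1" and P2: "P \<Phi>2" for \<Phi>1 \<Phi>2
  proof -
    define \<Psi> where "\<Psi> e = \<Phi>1 e - \<Phi>2 e" for e
    have H: "holomorphic_form D al sg \<rho> \<Psi>" unfolding \<Psi>_def
      using holo_diff P1 P2 unfolding P_def by blast
    have HB: "Re (loop_integral \<Psi> B) = 0" using P1 P2 unfolding P_def \<Psi>_def LI_diff by simp
    have Hper: "Re (loop_integral \<Psi> \<gamma>) = 0"
      if "is_loop D al sg \<gamma>" "\<forall>e\<in>set \<gamma>. \<forall>a\<in>set A. \<not> dual_edges al e a" for \<gamma>
      using P1 P2 that unfolding P_def \<Psi>_def LI_diff by simp
    have hf: "x \<in> D \<Longrightarrow> \<Psi> (Prim (al x)) = - \<Psi> (Prim x) \<and> \<Psi> (Dua (al x)) = - \<Psi> (Dua x) \<and>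
       \<Psi> (Dua x) = \<i> * of_real (\<rho> (Prim x)) * \<Psi> (Prim x) \<and>
       of_real (\<rho> (Dua x)) * \<Psi> (Dua x) = \<i> * \<Psi> (Prim x)" for x
      using holo_facts[OF H cs _ alD] by blast
    have clo: "closed_form D al sg \<Psi>" using H unfolding holomorphic_form_def by blast
    define b where "b x = Re (\<Psi> (Dua x))" for x
    have b0: "\<forall>x\<in>D. b x = 0"
    proof (rule G2.zero_form)
      show "\<forall>x\<in>D. b (al x) = - b x" unfolding b_def using hf by simp
      show "\<forall>y\<in>D. (\<Sum>x\<in>orbit (sg \<circ> al) y. \<rho> (Dua x) * b x) = 0"
      proof
        fix y assume y: "y \<in> D"
        have "(\<Sum>x\<in>orbit (sg \<circ> al) y. \<rho> (Dua x) * b x) = (\<Sum>x\<in>orbit (sg \<circ> al) y. - Im (\<Psi> (Prim x)))"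
        proof (rule sum.cong[OF refl])
          fix x assume "x \<in> orbit (sg \<circ> al) y" then have x: "x \<in> D" using G2.porb_sub[OF y] by blast
          have e: "of_real (\<rho> (Dua x)) * \<Psi> (Dua x) = \<i> * \<Psi> (Prim x)" using hf[OF x] by blast
          have "\<rho> (Dua x) * b x = Re (of_real (\<rho> (Dua x)) * \<Psi> (Dua x))" unfolding b_def by simp
          also have "\<dots> = Re (\<i> * \<Psi> (Prim x))" by (simp only: e)
          finally show "\<rho> (Dua x) * b x = - Im (\<Psi> (Prim x))" by simp
        qed
        also have "\<dots> = - Im (\<Sum>x\<in>orbit (sg \<circ> al) y. \<Psi> (Prim x))" by (simp add: Im_sum sum_negf)
        also have "\<dots> = 0" using clo y unfolding closed_form_def by simp
        finally show "(\<Sum>x\<in>orbit (sg \<circ> al) y. \<rho> (Dua x) * b x) = 0" .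
      qed
      show "\<forall>xs. G2.gloop xs \<longrightarrow> (\<Sum>x\<leftarrow>xs. b x) = 0"
      proof (intro allI impI)
        fix xs assume gl: "G2.gloop xs"
        have "is_loop D al sg (map Dua xs)" using gl unfolding is_loop_Dua G2.gloop_def by simp
        then have "Re (loop_integral \<Psi> (map Dua xs)) = 0" using Hper dua_avoid by blast
        then show "(\<Sum>x\<leftarrow>xs. b x) = 0" unfolding loop_integral_map b_def by (simp add: Re_sum_list)
      qed
    qed
    define a where "a x = Re (\<Psi> (Prim x))" for x
    have a0: "\<forall>x\<in>D. a x = 0"
    proof (rule M.uniqueness)
      show "\<forall>x\<in>D. a (al x) = - a x" unfolding a_def using hf by simp
      show "\<forall>y\<in>D. (\<Sum>x\<in>orbit (sg \<circ> al) y. a x) = 0"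
        using clo unfolding closed_form_def a_def by (simp add: Re_sum[symmetric])
      show "\<forall>y\<in>D. (\<Sum>x\<in>orbit sg y. \<rho> (Prim x) * a x) = 0"
      proof
        fix y assume y: "y \<in> D"
        have "(\<Sum>x\<in>orbit sg y. \<rho> (Prim x) * a x) = (\<Sum>x\<in>orbit sg y. Im (\<Psi> (Dua x)))"
        proof (rule sum.cong[OF refl])
          fix x assume "x \<in> orbit sg y" then have x: "x \<in> D" using G1.porb_sub[OF y] by blast
          have e: "\<Psi> (Dua x) = \<i> * of_real (\<rho> (Prim x)) * \<Psi> (Prim x)" using hf[OF x] by blast
          show "\<rho> (Prim x) * a x = Im (\<Psi> (Dua x))" unfolding a_def e by simp
        qed
        also have "\<dots> = Im (\<Sum>x\<in>orbit sg y. \<Psi> (Dua x))" by (simp add: Im_sum)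
        also have "\<dots> = 0" using clo y unfolding closed_form_def by simp
        finally show "(\<Sum>x\<in>orbit sg y. \<rho> (Prim x) * a x) = 0" .
      qed
      show "\<forall>xs. G1.gloop xs \<and> (\<forall>x\<in>set xs. \<not> M.cr x) \<longrightarrow> (\<Sum>x\<leftarrow>xs. a x) = 0"
      proof (intro allI impI)
        fix xs assume aa: "G1.gloop xs \<and> (\<forall>x\<in>set xs. \<not> M.cr x)"
        have lp: "is_loop D al sg (map Prim xs)" using aa unfolding is_loop_Prim G1.gloop_def by simp
        then have xsD: "set xs \<subseteq> D" unfolding is_loop_Prim by simp
        have "\<forall>e\<in>set (map Prim xs). \<forall>a\<in>set A. \<not> dual_edges al e a" using avoid_cr[OF xsD] aa by blast
        then have "Re (loop_integral \<Psi> (map Prim xs)) = 0" using Hper lp by blast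
        then show "(\<Sum>x\<leftarrow>xs. a x) = 0" unfolding loop_integral_map a_def by (simp add: Re_sum_list)
      qed
      show "(\<Sum>x\<leftarrow>B'. a x) = 0" using HB unfolding BB loop_integral_map a_def by (simp add: Re_sum_list)
    qed
    have "\<forall>x\<in>D. \<Psi> (Prim x) = 0 \<and> \<Psi> (Dua x) = 0"
    proof
      fix x assume x: "x \<in> D"
      have rp: "\<rho> (Prim x) > 0" using G1.w_pos[OF x] by simp
      have e: "\<Psi> (Dua x) = \<i> * of_real (\<rho> (Prim x)) * \<Psi> (Prim x)" using hf[OF x] by blast
      have "Re (\<Psi> (Dua x)) = - \<rho> (Prim x) * Im (\<Psi> (Prim x))" unfolding e by simp
      then have "Im (\<Psi> (Prim x)) = 0" using b0 x rp unfolding b_def by simp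
      then have p0: "\<Psi> (Prim x) = 0" using a0 x unfolding a_def by (simp add: complex_eq_iff)
      then show "\<Psi> (Prim x) = 0 \<and> \<Psi> (Dua x) = 0" using e by simp
    qed
    then have Z: "\<Psi> = (\<lambda>_. 0)" by (rule holo_zero[OF H])
    show "\<Phi>1 = \<Phi>2"
    proof
      fix e
      have "\<Psi> e = 0" using Z by simp
      then show "\<Phi>1 e = \<Phi>2 e" unfolding \<Psi>_def by simp
    qed
  qed
  have "\<exists>!\<Phi>. P \<Phi>" by (rule exists_unique_from[OF ex un])
  then show ?thesis by (simp add: P_def)
qed


theorem mainTheorem10:
  fixes D :: "'d set" and al sg :: "'d \<Rightarrow> 'd" and \<rho> :: "'d ledge \<Rightarrow> real"
    and A B :: "'d ledge list"
  assumes "comb_map D al sg"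
    and "conformal_structure D al \<rho>"
    and "simple_loop D al sg A" and "simple_loop D al sg B"
    and "loops_disjoint al sg A B"
    and "card {i. i < length A \<and> (\<exists>f\<in>set B. dual_edges al (A ! i) f)} = 1"
  shows "\<exists>!\<Phi>. holomorphic_form D al sg \<rho> \<Phi> \<and>
            Re (loop_integral \<Phi> B) = 1 \<and>
            (\<forall>\<gamma>. is_loop D al sg \<gamma> \<and> (\<forall>e\<in>set \<gamma>. \<forall>a\<in>set A. \<not> dual_edges al e a)
                 \<longrightarrow> Re (loop_integral \<Phi> \<gamma>) = 0)"
proof -
  note cm = assms(1) and cs = assms(2) and sA = assms(3) and sB = assms(4) and crs = assms(6)
  have lA: "is_loop D al sg A" using sA unfolding simple_loop_def by simp
  have lB: "is_loop D al sg B" using sB unfolding simple_loop_def by simp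
  have nocard: "False" if nd: "\<And>a f. a \<in> set A \<Longrightarrow> f \<in> set B \<Longrightarrow> \<not> dual_edges al a f"
  proof -
    have E: "{i. i < length A \<and> (\<exists>f\<in>set B. dual_edges al (A ! i) f)} = {}"
      using nd nth_mem by blast
    show False using crs unfolding E by simp
  qed
  consider "A = map Prim (map unl A)" | "A = map Dua (map unl A)" using loop_kinds[OF lA] by blast
  then show ?thesis
  proof cases
    case A1: 1
    consider "B = map Prim (map unl B)" | "B = map Dua (map unl B)" using loop_kinds[OF lB] by blast
    then show ?thesis
    proof cases
      case 1
      have "\<not> dual_edges al a f" if "a \<in> set A" "f \<in> set B" for a f
      proof -
        obtain xs where xs: "A = map Prim xs" using A1 by blast
        obtain ys where ys: "B = map Prim ys" using 1 by blast
        have "a \<in> Prim ` set xs" using that(1) unfolding xs by simp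
        then obtain x where "a = Prim x" by blast
        moreover have "f \<in> Prim ` set ys" using that(2) unfolding ys by simp
        then obtain y where "f = Prim y" by blast
        ultimately show ?thesis unfolding dual_edges_def by simp
      qed
      then show ?thesis using nocard by blast
    next
      case 2
      show ?thesis by (rule case1[OF cm cs A1 2 sA sB crs])
    qed
  next
    case A2: 2
    consider "B = map Prim (map unl B)" | "B = map Dua (map unl B)" using loop_kinds[OF lB] by blast
    then show ?thesis
    proof cases
      case 1
      show ?thesis by (rule case2[OF cm cs A2 1 sA sB crs])
    next
      case 2
      have "\<not> dual_edges al a f" if "a \<in> set A" "f \<in> set B" for a f
      proof -
        obtain xs where xs: "A = map Dua xs" using A2 by blast
        obtain ys where ys: "B = map Dua ys" using 2 by blast
        have "a \<in> Dua ` set xs" using that(1) unfolding xs by simp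
        then obtain x where "a = Dua x" by blast
        moreover have "f \<in> Dua ` set ys" using that(2) unfolding ys by simp
        then obtain y where "f = Dua y" by blast
        ultimately show ?thesis unfolding dual_edges_def by simp
      qed
      then show ?thesis using nocard by blast
    qed
  qed
qed

end
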